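(* Let $A\in\mathbb{R}^{n\times d}$, $b\in\mathbb{R}^n$, and suppose $Ax=b$ admits a solution $x^*$; let $H$ be the set of solutions and $P_H$ the projection onto $H$. Let $x_0\in\mathbb{R}^d$ and $\mathrm{rrow}(A)=\mathrm{span}\lbrace A_{i,\cdot}:A_{i,\cdot}'x_0\neq b_i\rbrace$. Generate $\lbrace w_k\rbrace,\lbrace x_k\rbrace$ by $w_k=\varphi(A,b,x_k)$ and $x_{k+1} = x_k + A'w_kw_k'(b-Ax_k)/\|A'w_k\|_2^2$, where $\varphi$ is any one of the following adaptive methods ($e_1,\ldots,e_n$ the standard basis of $\mathbb{R}^n$): (1) maximum residual: $\varphi(A,b,x)$ is the $e\in\lbrace e_1,\ldots,e_n\rbrace$ maximizing $|e'(Ax-b)|$; (2) maximum distance: $\varphi(A,b,x)$ is the $e\in\lbrace e_1,\ldots,e_n\rbrace$ maximizing $|e'(Ax-b)|/\|A'e\|_2^2$; (3) Greedy Randomized Kaczmarz: with threshold $\epsilon(x)=\frac12\big(\frac{1}{\|Ax-b\|_2^2}\max_{e\in\lbrace e_1,\ldots,e_n\rbrace}\frac{|e'(Ax-b)|^2}{\|A'e\|_2^2}+\frac{1}{\|A\|_F^2}\big)$, form the set of equations $i$ whose residual surpasses the threshold (i.e. $|e_i'(Ax-b)|^2\geq\epsilon(x)\|Ax-b\|_2^2\|A_{i,\cdot}\|_2^2$) and select $e_i$ from this set with probability proportional to $|e_i'(Ax-b)|^2$; (4) Sampling Kaczmarz–Motzkin: at each iteration, independently, select a random subset of $\psi$ of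 the equations (uniformly, without replacement), and then choose the $e_i$ with $i$ in this subset maximizing $|e_i'(Ax-b)|$. Then, for each of these methods, there exists $\gamma\in[0,1)$ and an increasing sequence of stopping times $\lbrace\tau_\ell:\ell\in\mathbb{N}\rbrace$ such that $\mathbb{P}[E_1\cup E_2]=1$, where $E_1=\bigcup_{\ell}\lbrace x_{\tau_\ell+1}\in H\rbrace$ and $E_2=\bigcap_\ell\lbrace\|x_{\tau_\ell+1}-P_H(x_0)\|_2^2\leq\gamma^\ell\|x_0-P_H(x_0)\|_2^2\rbrace$; on $E_1$, $\tau_\ell$ has finite expectation for $\ell$ with $x_{\tau_\ell+1}\in H$, and on $E_2$, $\tau_\ell$ has finite expectation for all $\ell$. Moreover, there exists a constant $\kappa$ such that for any finite $\tau_\ell$, $\mathbb{E}[\tau_\ell]\leq\ell\kappa$.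
   Context: $A_{i,\cdot}\in\mathbb{R}^d$ is the $i$-th row of $A$, $A'$ the transpose, $\|A\|_F$ the Frobenius norm. $P_H$ is the Euclidean projection onto the affine solution set $H$. *)

theory Defs
  imports "HOL-Analysis.Analysis" "HOL-Probability.Probability"
begin

text \<open>Rows are indexed by the finite type 'n (so n = CARD('n)), columns by 'd (d = CARD('d)).
  A :: real^'d^'n, so A $ i is the i-th row, transpose A is A', and axis i 1 is e_i.\<close>


definition sol_set :: "real^'d^'n \<Rightarrow> real^'n \<Rightarrow> (real^'d) set" where
  "sol_set A b = {x. A *v x = b}"

definition frob_sq :: "real^'d^'n \<Rightarrow> real" where
  "frob_sq A = (\<Sum>i\<in>UNIV. (norm (A $ i))\<^sup>2)"

text \<open>The iteration x_{k+1} = x_k + A' w w' (b - A x_k) / ||A' w||^2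
  (Isabelle convention: division by 0 gives 0).\<close>
definition kacz_step :: "real^'d^'n \<Rightarrow> real^'n \<Rightarrow> real^'d \<Rightarrow> real^'n \<Rightarrow> real^'d" where
  "kacz_step A b x w =
     x + ((w \<bullet> (b - A *v x)) / (norm (transpose A *v w))\<^sup>2) *\<^sub>R (transpose A *v w)"

definition grk_eps :: "real^'d^'n \<Rightarrow> real^'n \<Rightarrow> real^'d \<Rightarrow> real" where
  "grk_eps A b x =
     (1/2) * ((1 / (norm (A *v x - b))\<^sup>2) *
                (MAX j. \<bar>(A *v x - b) $ j\<bar>\<^sup>2 / (norm (A $ j))\<^sup>2)
              + 1 / frob_sq A)"

definition grk_set :: "real^'d^'n \<Rightarrow> real^'n \<Rightarrow> real^'d \<Rightarrow> 'n set" where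
  "grk_set A b x = {i. \<bar>(A *v x - b) $ i\<bar>\<^sup>2 \<ge>
                        grk_eps A b x * (norm (A *v x - b))\<^sup>2 * (norm (A $ i))\<^sup>2}"

definition grk_prob :: "real^'d^'n \<Rightarrow> real^'n \<Rightarrow> real^'d \<Rightarrow> 'n \<Rightarrow> real" where
  "grk_prob A b x i =
     (if i \<in> grk_set A b x
      then \<bar>(A *v x - b) $ i\<bar>\<^sup>2 / (\<Sum>j\<in>grk_set A b x. \<bar>(A *v x - b) $ j\<bar>\<^sup>2)
      else 0)"

datatype adaptive_method = MaxResidual | MaxDistance | GRK | SKM nat

definition enat_filt :: "'a measure \<Rightarrow> (nat \<Rightarrow> 'a measure) \<Rightarrow> enat \<Rightarrow> 'a measure" where
  "enat_filt M F t = (case t of enat k \<Rightarrow> F k | \<infinity> \<Rightarrow> M)"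

text \<open>(x_k, w_k) is a process generated by the adaptive method m from x0, on the probability
  space M with filtration F: x_k is F_k-measurable, w_k is F_{k+1}-measurable, w_k is a
  standard basis vector chosen according to the method (random choices are fresh given F_k),
  and x_{k+1} is given by the update.\<close>
definition generated_by ::
  "'a measure \<Rightarrow> (nat \<Rightarrow> 'a measure) \<Rightarrow> adaptive_method \<Rightarrow> real^'d^'n \<Rightarrow> real^'n \<Rightarrow> real^'d
   \<Rightarrow> (nat \<Rightarrow> 'a \<Rightarrow> real^'d) \<Rightarrow> (nat \<Rightarrow> 'a \<Rightarrow> real^'n) \<Rightarrow> bool" where
  "generated_by M F m A b x0 x w \<longleftrightarrow>
     prob_space M \<and> filtration (space M) F \<and> (\<forall>k. subalgebra M (F k)) \<and>
     (\<forall>\<omega>\<in>space M. x 0 \<omega> = x0) \<and>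
     (\<forall>k. \<forall>\<omega>\<in>space M. x (Suc k) \<omega> = kacz_step A b (x k \<omega>) (w k \<omega>)) \<and>
     (\<forall>k. x k \<in> borel_measurable (F k)) \<and>
     (\<forall>k. w k \<in> borel_measurable (F (Suc k))) \<and>
     (\<forall>k. \<forall>\<omega>\<in>space M. \<exists>i. w k \<omega> = axis i 1) \<and>
     (case m of
        MaxResidual \<Rightarrow>
          (\<forall>k. \<forall>\<omega>\<in>space M. \<exists>i. w k \<omega> = axis i 1 \<and>
              (\<forall>j. \<bar>(A *v x k \<omega> - b) $ j\<bar> \<le> \<bar>(A *v x k \<omega> - b) $ i\<bar>))
      | MaxDistance \<Rightarrow>
          (\<forall>k. \<forall>\<omega>\<in>space M. \<exists>i. w k \<omega> = axis i 1 \<and>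
              (\<forall>j. \<bar>(A *v x k \<omega> - b) $ j\<bar> / (norm (A $ j))\<^sup>2
                     \<le> \<bar>(A *v x k \<omega> - b) $ i\<bar> / (norm (A $ i))\<^sup>2))
      | GRK \<Rightarrow>
          (\<forall>k i. \<forall>B\<in>sets (F k).
              measure M ({\<omega>\<in>space M. w k \<omega> = axis i 1 \<and> A *v x k \<omega> \<noteq> b} \<inter> B)
              = (LINT \<omega>:B|M. (if A *v x k \<omega> \<noteq> b then grk_prob A b (x k \<omega>) i else 0)))
      | SKM \<psi> \<Rightarrow>
          1 \<le> \<psi> \<and> \<psi> \<le> CARD('n) \<and>
          (\<exists>S :: nat \<Rightarrow> 'a \<Rightarrow> 'n set.
             (\<forall>k T. {\<omega>\<in>space M. S k \<omega> = T} \<in> sets (F (Suc k))) \<and>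
             (\<forall>k T. \<forall>B\<in>sets (F k). card T = \<psi> \<longrightarrow>
                 measure M ({\<omega>\<in>space M. S k \<omega> = T} \<inter> B)
                 = measure M B / real (CARD('n) choose \<psi>)) \<and>
             (\<forall>k. \<forall>\<omega>\<in>space M. \<exists>i\<in>S k \<omega>. w k \<omega> = axis i 1 \<and>
                 (\<forall>j\<in>S k \<omega>. \<bar>(A *v x k \<omega> - b) $ j\<bar> \<le> \<bar>(A *v x k \<omega> - b) $ i\<bar>))))"

end

theory Submission
  imports Defs
begin



lemma mv_nth: "(A *v x) $ i = A $ i \<bullet> (x::real^'d)"
  by (simp add: matrix_vector_mult_def inner_vec_def)

lemma tr_axis: "transpose A *v axis i 1 = (A::real^'d^'n) $ i"
  by (simp add: matrix_vector_mult_basis column_def transpose_def vec_eq_iff)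

definition orth :: "real^'d^'n \<Rightarrow> real^'d \<Rightarrow> bool" where
  "orth A v \<longleftrightarrow> (\<forall>z. A *v z = 0 \<longrightarrow> v \<bullet> z = 0)"

lemma orth_row: "orth A (A $ i)"
  unfolding orth_def by (metis mv_nth zero_index)

lemma orth_diff: "orth A u \<Longrightarrow> orth A v \<Longrightarrow> orth A (u - v)"
  unfolding orth_def by (simp add: inner_diff_left)

lemma orth_scale: "orth A u \<Longrightarrow> orth A (c *\<^sub>R u)"
  unfolding orth_def by simp

lemma norm_sub_sq:
  fixes v a :: "'a::real_inner"
  shows "(norm (v - t *\<^sub>R a))\<^sup>2 = v \<bullet> v - 2 * t * (a \<bullet> v) + t^2 * (a \<bullet> a)"
  by (simp only: power2_norm_eq_inner) (simp add: inner_diff_left inner_diff_right inner_commute algebra_simps power2_eq_square)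

lemma aux_vec: "(x::'a::real_vector) + (- c / n) *\<^sub>R a - p = (x - p) - (c / n) *\<^sub>R a"
  by (simp add: algebra_simps)

lemma proj_norm:
  fixes v a :: "'a::real_inner"
  shows "(norm (v - ((a \<bullet> v) / (norm a)\<^sup>2) *\<^sub>R a))\<^sup>2 = (norm v)\<^sup>2 - (a \<bullet> v)\<^sup>2 / (norm a)\<^sup>2"
proof (cases "a = 0")
  case True then show ?thesis by simp
next
  case False
  then have n: "(norm a)\<^sup>2 \<noteq> 0" by simp
  have aa: "a \<bullet> a = (norm a)\<^sup>2" "v \<bullet> v = (norm v)\<^sup>2" by (simp_all add: power2_norm_eq_inner)
  show ?thesis unfolding norm_sub_sq aa
    using n by (simp add: field_simps power2_eq_square)
qed

lemma step_eq:
  fixes A :: "real^'d^'n"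
  assumes "A *v p = b"
  shows "kacz_step A b x (axis i 1) - p = (x - p) - ((A$i \<bullet> (x - p)) / (norm (A$i))\<^sup>2) *\<^sub>R A$i"
proof -
  have "axis i 1 \<bullet> (b - A *v x) = - (A$i \<bullet> (x - p))"
    using assms by (simp add: inner_axis' mv_nth[symmetric] inner_diff_right)
  note c = this
  show ?thesis unfolding kacz_step_def tr_axis c by (rule aux_vec)
qed

lemma step_norm:
  fixes A :: "real^'d^'n"
  assumes "A *v p = b"
  shows "(norm (kacz_step A b x (axis i 1) - p))\<^sup>2 = (norm (x - p))\<^sup>2 - (A$i \<bullet> (x - p))\<^sup>2 / (norm (A$i))\<^sup>2"
  unfolding step_eq[OF assms] by (rule proj_norm)

lemma step_orth:
  fixes A :: "real^'d^'n"
  assumes "A *v p = b" "orth A (x - p)"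
  shows "orth A (kacz_step A b x (axis i 1) - p)"
  unfolding step_eq[OF assms(1)] by (intro orth_diff orth_scale assms(2) orth_row)

lemma resid_eq:
  fixes A :: "real^'d^'n"
  assumes "A *v p = b"
  shows "(A *v x - b) $ i = A$i \<bullet> (x - p)"
  using assms by (simp add: mv_nth[symmetric] matrix_vector_mult_diff_distrib)

lemma sol_closed: "closed (sol_set A b)"
proof -
  have "continuous_on UNIV ((*v) A)"
    by (simp add: linear_continuous_on matrix_vector_mul_linear)
  then show ?thesis unfolding sol_set_def
    by (intro closed_Collect_eq continuous_on_const) auto
qed

lemma sol_convex: "convex (sol_set A b)"
  unfolding sol_set_def convex_def
  by (simp add: matrix_vector_right_distrib matrix_vector_mult_scaleR scaleR_left_distrib[symmetric])

lemma proj_props: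
  fixes A :: "real^'d^'n"
  assumes "\<exists>xs. A *v xs = b" and p_def: "p = closest_point (sol_set A b) x0"
  shows "A *v p = b" "orth A (x0 - p)"
proof -
  have ne: "sol_set A b \<noteq> {}" using assms(1) unfolding sol_set_def by auto
  have pin: "p \<in> sol_set A b" unfolding p_def by (rule closest_point_in_set[OF sol_closed ne])
  then show "A *v p = b" unfolding sol_set_def by simp
  show "orth A (x0 - p)" unfolding orth_def
  proof (intro allI impI)
    fix z assume z: "A *v z = 0"
    have "p + z \<in> sol_set A b" "p - z \<in> sol_set A b" using pin z
      by (auto simp: sol_set_def matrix_vector_right_distrib matrix_vector_mult_diff_distrib)
    from closest_point_dot[OF sol_convex sol_closed this(1), where a=x0] closest_point_dot[OF sol_convex sol_closed this(2), where a=x0]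
    have "(x0 - p) \<bullet> z \<le> 0" "(x0 - p) \<bullet> (- z) \<le> 0" unfolding p_def[symmetric] by auto
    then show "(x0 - p) \<bullet> z = 0" by simp
  qed
qed

lemma sigma_exists:
  fixes A :: "real^'d^'n"
  shows "\<exists>\<sigma>>0. \<forall>v. orth A v \<longrightarrow> \<sigma> * (norm v)\<^sup>2 \<le> (norm (A *v v))\<^sup>2"
proof -
  define K where "K = {v. orth A v} \<inter> sphere 0 1"
  have cl: "closed {v. orth A v}"
  proof -
    have "{v. orth A v} = (\<Inter>z\<in>{z. A *v z = 0}. {v. z \<bullet> v = 0})"
      unfolding orth_def by (auto simp: inner_commute)
    then show ?thesis by (simp add: closed_INT closed_hyperplane)
  qed
  have cK: "compact K" unfolding K_def by (intro closed_Int_compact cl compact_sphere)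
  show ?thesis
  proof (cases "K = {}")
    case True
    have "v = 0" if "orth A v" for v
    proof (rule ccontr)
      assume "v \<noteq> 0"
      then have "(1 / norm v) *\<^sub>R v \<in> K" using that unfolding K_def by (auto intro: orth_scale)
      then show False using True by simp
    qed
    note z = this
    show ?thesis
    proof (intro exI[of _ 1] conjI allI impI)
      fix v assume "orth A v"
      then have "v = 0" by (rule z)
      then show "1 * (norm v)\<^sup>2 \<le> (norm (A *v v))\<^sup>2" by simp
    qed simp
  next
    case False
    have "continuous_on K (\<lambda>v. (norm (A *v v))\<^sup>2)"
      by (intro continuous_intros linear_continuous_on matrix_vector_mul_linear)
    from continuous_attains_inf[OF cK False this] obtain v0 where
      v0: "v0 \<in> K" "\<And>y. y \<in> K \<Longrightarrow> (norm (A *v v0))\<^sup>2 \<le> (norm (A *v y))\<^sup>2" by blast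
    have pos: "(norm (A *v v0))\<^sup>2 > 0"
    proof (rule ccontr)
      assume "\<not> ?thesis"
      then have "A *v v0 = 0" by simp
      with v0(1) have "v0 \<bullet> v0 = 0" unfolding K_def orth_def by auto
      with v0(1) show False unfolding K_def by simp
    qed
    show ?thesis
    proof (intro exI[of _ "(norm (A *v v0))\<^sup>2"] conjI pos allI impI)
      fix v assume ov: "orth A v"
      show "(norm (A *v v0))\<^sup>2 * (norm v)\<^sup>2 \<le> (norm (A *v v))\<^sup>2"
      proof (cases "v = 0")
        case True then show ?thesis by simp
      next
        case False
        then have "(1 / norm v) *\<^sub>R v \<in> K" using ov unfolding K_def by (auto intro: orth_scale)
        from v0(2)[OF this] have "(norm (A *v v0))\<^sup>2 \<le> (norm (A *v v))\<^sup>2 / (norm v)\<^sup>2"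
          by (simp add: matrix_vector_mult_scaleR power_divide)
        then show ?thesis using False by (simp add: field_simps)
      qed
    qed
  qed
qed



lemma frob_nn: "0 \<le> frob_sq A"
  unfolding frob_sq_def by (simp add: sum_nonneg)

lemma row_le_frob: "(norm (A$i))\<^sup>2 \<le> frob_sq A"
  unfolding frob_sq_def by (rule member_le_sum) simp_all

lemma norm_sq_sum: "(norm (y::real^'n))\<^sup>2 = (\<Sum>j\<in>UNIV. (y$j)\<^sup>2)"
  unfolding power2_norm_eq_inner inner_vec_def by (simp add: power2_eq_square)

lemma resid_eq':
  fixes A :: "real^'d^'n"
  assumes "A *v p = b"
  shows "(A *v x) $ i - b $ i = A$i \<bullet> (x - p)"
  using resid_eq[OF assms] by simp

lemma prog_ge_K:
  fixes A :: "real^'d^'n"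
  shows "(A$i \<bullet> v)\<^sup>2 / (frob_sq A + 1) \<le> (A$i \<bullet> v)\<^sup>2 / (norm (A$i))\<^sup>2"
proof (cases "A$i = 0")
  case True then show ?thesis by simp
next
  case False
  have n: "0 < (norm (A$i))\<^sup>2" using False by simp
  have K: "0 < frob_sq A + 1" using frob_nn[of A] by linarith
  show ?thesis
    by (rule divide_left_mono) (use row_le_frob[of A i] n K in auto)
qed

lemma prog_nn: "0 \<le> (a \<bullet> v)\<^sup>2 / (norm a)\<^sup>2"
  by simp

lemma maxres_prog:
  fixes A :: "real^'d^'n"
  assumes p: "A *v p = b" and mx: "\<forall>j. \<bar>(A *v x - b) $ j\<bar> \<le> \<bar>(A *v x - b) $ i\<bar>"
  shows "(norm (A *v x - b))\<^sup>2 / (real CARD('n) * (frob_sq A + 1)) \<le> (A$i \<bullet> (x - p))\<^sup>2 / (norm (A$i))\<^sup>2"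
proof -
  let ?r = "A *v x - b"
  have "(norm ?r)\<^sup>2 = (\<Sum>j\<in>UNIV. (?r$j)\<^sup>2)" by (rule norm_sq_sum)
  also have "\<dots> \<le> (\<Sum>j\<in>(UNIV::'n set). (?r$i)\<^sup>2)"
    using mx by (intro sum_mono) (simp add: abs_le_square_iff)
  also have "\<dots> = real CARD('n) * (?r$i)\<^sup>2" by simp
  finally have 1: "(norm ?r)\<^sup>2 \<le> real CARD('n) * (?r$i)\<^sup>2" .
  have K: "0 < frob_sq A + 1" using frob_nn[of A] by linarith
  have "(norm ?r)\<^sup>2 / (real CARD('n) * (frob_sq A + 1)) \<le> real CARD('n) * (?r$i)\<^sup>2 / (real CARD('n) * (frob_sq A + 1))"
    using 1 K by (intro divide_right_mono) auto
  also have "\<dots> = (?r$i)\<^sup>2 / (frob_sq A + 1)" by simp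
  also have "\<dots> = (A$i \<bullet> (x - p))\<^sup>2 / (frob_sq A + 1)" by (simp only: resid_eq[OF p])
  also have "\<dots> \<le> (A$i \<bullet> (x - p))\<^sup>2 / (norm (A$i))\<^sup>2" by (rule prog_ge_K)
  finally show ?thesis .
qed

definition minrow :: "real^'d^'n \<Rightarrow> real" where
  "minrow A = Min (insert 1 ((\<lambda>j. (norm (A$j))\<^sup>2) ` {j. A$j \<noteq> 0}))"

lemma minrow_pos: "0 < minrow A"
  unfolding minrow_def by (subst Min_gr_iff) auto

lemma minrow_le: "A$j \<noteq> 0 \<Longrightarrow> minrow A \<le> (norm (A$j))\<^sup>2"
  unfolding minrow_def by (intro Min_le) auto

lemma sq_aux: "0 < (N::real) \<Longrightarrow> r\<^sup>2 / N = (\<bar>r\<bar> / N)^2 * N"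
  by (simp add: power_divide power2_eq_square)

lemma sq_aux2: "0 < (K::real) \<Longrightarrow> 0 < c \<Longrightarrow> m * (c * (q * K)\<^sup>2) / (c * K^2) = m * q^2"
  by (simp add: power_mult_distrib)

lemma maxdist_prog:
  fixes A :: "real^'d^'n"
  assumes p: "A *v p = b"
    and mx: "\<forall>j. \<bar>(A *v x - b) $ j\<bar> / (norm (A $ j))\<^sup>2 \<le> \<bar>(A *v x - b) $ i\<bar> / (norm (A $ i))\<^sup>2"
  shows "minrow A * (norm (A *v x - b))\<^sup>2 / (real CARD('n) * (frob_sq A + 1)^2) \<le> (A$i \<bullet> (x - p))\<^sup>2 / (norm (A$i))\<^sup>2"
proof -
  let ?r = "A *v x - b"
  define q where "q = \<bar>?r $ i\<bar> / (norm (A $ i))\<^sup>2"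
  define K where "K = frob_sq A + 1"
  have K: "0 < K" using frob_nn[of A] unfolding K_def by linarith
  have q0: "0 \<le> q" unfolding q_def by simp
  have rz: "?r $ j = 0" if "A$j = 0" for j using that resid_eq[OF p, of x j] by simp
  have rj: "\<bar>?r$j\<bar> \<le> q * K" for j
  proof (cases "A$j = 0")
    case True then show ?thesis using rz q0 K by simp
  next
    case False
    then have n: "0 < (norm (A$j))\<^sup>2" by simp
    have "\<bar>?r$j\<bar> / (norm (A$j))\<^sup>2 \<le> q" using mx unfolding q_def by blast
    then have "\<bar>?r$j\<bar> \<le> q * (norm (A$j))\<^sup>2" using n by (simp add: divide_le_eq)
    also have "\<dots> \<le> q * K" using row_le_frob[of A j] q0 unfolding K_def by (intro mult_left_mono) auto
    finally show ?thesis .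
  qed
  have "(norm ?r)\<^sup>2 = (\<Sum>j\<in>UNIV. (?r$j)\<^sup>2)" by (rule norm_sq_sum)
  also have "\<dots> \<le> (\<Sum>j\<in>(UNIV::'n set). (q * K)\<^sup>2)"
  proof (intro sum_mono)
    fix j
    have "\<bar>?r$j\<bar> \<le> \<bar>q * K\<bar>" using rj[of j] q0 K by simp
    then show "(?r$j)\<^sup>2 \<le> (q * K)\<^sup>2" by (simp only: abs_le_square_iff)
  qed
  also have "\<dots> = real CARD('n) * (q * K)\<^sup>2" by simp
  finally have 1: "(norm ?r)\<^sup>2 \<le> real CARD('n) * (q * K)\<^sup>2" .
  show ?thesis
  proof (cases "A$i = 0")
    case True
    then have "q = 0" unfolding q_def by simp
    then have "(norm ?r)\<^sup>2 \<le> 0" using 1 by simp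
    then have "(norm ?r)\<^sup>2 = 0" using zero_le_power2[of "norm ?r"] by linarith
    then show ?thesis by simp
  next
    case False
    then have n: "0 < (norm (A$i))\<^sup>2" by simp
    have prog: "(A$i \<bullet> (x - p))\<^sup>2 / (norm (A$i))\<^sup>2 = q^2 * (norm (A$i))\<^sup>2"
      unfolding q_def resid_eq[OF p, symmetric] using n by (rule sq_aux)
    have "minrow A * (norm ?r)\<^sup>2 / (real CARD('n) * K^2) \<le> minrow A * (real CARD('n) * (q * K)\<^sup>2) / (real CARD('n) * K^2)"
      using 1 minrow_pos[of A] K by (intro divide_right_mono mult_left_mono) auto
    also have "\<dots> = minrow A * q^2" by (rule sq_aux2[OF K]) simp
    also have "\<dots> \<le> (norm (A$i))\<^sup>2 * q^2" using minrow_le[OF False] by (intro mult_right_mono) auto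
    finally show ?thesis unfolding prog K_def by (simp add: mult.commute)
  qed
qed

lemma grk_prog:
  fixes A :: "real^'d^'n"
  assumes p: "A *v p = b" and g: "grk_prob A b x i \<noteq> 0"
  shows "(norm (A *v x - b))\<^sup>2 / (2 * (frob_sq A + 1)) \<le> (A$i \<bullet> (x - p))\<^sup>2 / (norm (A$i))\<^sup>2"
proof -
  let ?r = "A *v x - b"
  have ins: "i \<in> grk_set A b x" and ri: "?r $ i \<noteq> 0" using g unfolding grk_prob_def by (auto split: if_splits)
  have ai: "A$i \<noteq> 0" using ri resid_eq[OF p, of x i] by auto
  then have n: "0 < (norm (A$i))\<^sup>2" by simp
  have F: "0 < frob_sq A" using row_le_frob[of A i] n by linarith
  have mx: "0 \<le> (MAX j. \<bar>?r $ j\<bar>\<^sup>2 / (norm (A $ j))\<^sup>2)"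
    by (rule order_trans[OF _ Max_ge[where x="\<bar>?r $ i\<bar>\<^sup>2 / (norm (A $ i))\<^sup>2"]]) auto
  have eps: "1 / (2 * frob_sq A) \<le> grk_eps A b x"
    unfolding grk_eps_def using mx by (simp add: field_simps)
  have "grk_eps A b x * (norm ?r)\<^sup>2 * (norm (A$i))\<^sup>2 \<le> \<bar>?r $ i\<bar>\<^sup>2" using ins unfolding grk_set_def by simp
  then have "grk_eps A b x * (norm ?r)\<^sup>2 \<le> (?r $ i)\<^sup>2 / (norm (A$i))\<^sup>2" using n by (simp add: field_simps)
  moreover have "(norm ?r)\<^sup>2 / (2 * (frob_sq A + 1)) \<le> (norm ?r)\<^sup>2 / (2 * frob_sq A)"
    using F by (intro divide_left_mono) auto
  moreover have "(norm ?r)\<^sup>2 / (2 * frob_sq A) \<le> grk_eps A b x * (norm ?r)\<^sup>2"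
    using eps by (metis mult_right_mono zero_le_power2 times_divide_eq_left mult_1)
  ultimately show ?thesis unfolding resid_eq[OF p] by simp
qed

lemma skm_prog:
  fixes A :: "real^'d^'n"
  assumes p: "A *v p = b" and mx: "\<forall>j\<in>S. \<bar>(A *v x - b) $ j\<bar> \<le> \<bar>(A *v x - b) $ i\<bar>" and j: "j \<in> S"
  shows "((A *v x - b) $ j)\<^sup>2 / (frob_sq A + 1) \<le> (A$i \<bullet> (x - p))\<^sup>2 / (norm (A$i))\<^sup>2"
proof -
  have K: "0 < frob_sq A + 1" using frob_nn[of A] by linarith
  have "((A *v x - b) $ j)\<^sup>2 \<le> ((A *v x - b) $ i)\<^sup>2" using mx j by (simp add: abs_le_square_iff)
  then have "((A *v x - b) $ j)\<^sup>2 / (frob_sq A + 1) \<le> (A$i \<bullet> (x - p))\<^sup>2 / (frob_sq A + 1)"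
    using K unfolding resid_eq[OF p] by (simp add: divide_right_mono)
  also have "\<dots> \<le> (A$i \<bullet> (x - p))\<^sup>2 / (norm (A$i))\<^sup>2" by (rule prog_ge_K)
  finally show ?thesis .
qed



definition tau_of :: "(nat \<Rightarrow> 'a \<Rightarrow> real) \<Rightarrow> real \<Rightarrow> real \<Rightarrow> nat \<Rightarrow> 'a \<Rightarrow> enat" where
  "tau_of e \<rho> e0 l \<omega> = (if \<exists>k. e k \<omega> \<le> \<rho>^l * e0 then enat (LEAST k. e k \<omega> \<le> \<rho>^l * e0) else \<infinity>)"

lemma tau_le_iff:
  assumes "\<And>k. e (Suc k) \<omega> \<le> e k \<omega>"
  shows "tau_of e \<rho> e0 l \<omega> \<le> enat k \<longleftrightarrow> e k \<omega> \<le> \<rho>^l * e0"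
proof
  assume a: "tau_of e \<rho> e0 l \<omega> \<le> enat k"
  then have ex: "\<exists>k. e k \<omega> \<le> \<rho>^l * e0" unfolding tau_of_def by (auto split: if_splits)
  then have le: "(LEAST k. e k \<omega> \<le> \<rho>^l * e0) \<le> k" using a unfolding tau_of_def by simp
  have "e (LEAST k. e k \<omega> \<le> \<rho>^l * e0) \<omega> \<le> \<rho>^l * e0" using ex by (rule LeastI_ex)
  moreover have "e k \<omega> \<le> e (LEAST k. e k \<omega> \<le> \<rho>^l * e0) \<omega>"
    by (rule lift_Suc_antimono_le[of "\<lambda>k. e k \<omega>", OF assms le])
  ultimately show "e k \<omega> \<le> \<rho>^l * e0" by simp
next
  assume a: "e k \<omega> \<le> \<rho>^l * e0"
  then show "tau_of e \<rho> e0 l \<omega> \<le> enat k" unfolding tau_of_def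
    by (auto intro: Least_le)
qed

lemma tau_fin:
  assumes "tau_of e \<rho> e0 l \<omega> = enat k"
  shows "e k \<omega> \<le> \<rho>^l * e0"
proof -
  have ex: "\<exists>k. e k \<omega> \<le> \<rho>^l * e0" using assms unfolding tau_of_def by (auto split: if_splits)
  then have "k = (LEAST k. e k \<omega> \<le> \<rho>^l * e0)" using assms unfolding tau_of_def by simp
  then show ?thesis using LeastI_ex[OF ex] by simp
qed

lemma tau_bound_sum:
  "ennreal_of_enat (tau_of e \<rho> e0 l \<omega>) \<le> (\<Sum>t. ennreal (indicator {\<omega>. e t \<omega> > \<rho>^l * e0} \<omega>))"
proof (cases "\<exists>k. e k \<omega> \<le> \<rho>^l * e0")
  case True
  define k0 where "k0 = (LEAST k. e k \<omega> \<le> \<rho>^l * e0)"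
  have t: "tau_of e \<rho> e0 l \<omega> = enat k0" using True unfolding tau_of_def k0_def by simp
  have "\<And>t. t < k0 \<Longrightarrow> e t \<omega> > \<rho>^l * e0" unfolding k0_def using not_less_Least by force
  then have "(\<Sum>t<k0. ennreal (indicator {\<omega>. e t \<omega> > \<rho>^l * e0} \<omega>)) = (\<Sum>t<k0. 1)"
    by (intro sum.cong) auto
  also have "\<dots> = of_nat k0" by simp
  finally have eq: "(\<Sum>t<k0. ennreal (indicator {\<omega>. e t \<omega> > \<rho>^l * e0} \<omega>)) = of_nat k0" .
  have "(\<Sum>t<k0. ennreal (indicator {\<omega>. e t \<omega> > \<rho>^l * e0} \<omega>)) \<le> (\<Sum>t. ennreal (indicator {\<omega>. e t \<omega> > \<rho>^l * e0} \<omega>))"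
    by (rule sum_le_suminf[OF summableI]) simp_all
  then have "of_nat k0 \<le> (\<Sum>t. ennreal (indicator {\<omega>. e t \<omega> > \<rho>^l * e0} \<omega>))" using eq by simp
  then show ?thesis using t by simp
next
  case False
  then have "(\<lambda>t. ennreal (indicator {\<omega>. e t \<omega> > \<rho>^l * e0} \<omega>)) = (\<lambda>t. ennreal 1)"
    by (auto simp: not_le)
  moreover have "(\<Sum>t. ennreal 1) = \<top>"
    by (rule summable_iff_suminf_neq_top) (auto simp: summable_const_iff)
  ultimately show ?thesis by simp
qed

lemma tau_mono:
  assumes "\<And>k. e (Suc k) \<omega> \<le> e k \<omega>" "0 < \<rho>" "\<rho> \<le> 1" "0 \<le> e0"
  shows "mono (\<lambda>l. tau_of e \<rho> e0 l \<omega>)"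
proof (rule monoI)
  fix l l' :: nat assume ll: "l \<le> l'"
  show "tau_of e \<rho> e0 l \<omega> \<le> tau_of e \<rho> e0 l' \<omega>"
  proof (cases "tau_of e \<rho> e0 l' \<omega>")
    case (enat k)
    then have "e k \<omega> \<le> \<rho>^l' * e0" by (rule tau_fin)
    also have "\<dots> \<le> \<rho>^l * e0" using assms ll by (intro mult_right_mono power_decreasing) auto
    finally have "tau_of e \<rho> e0 l \<omega> \<le> enat k" using tau_le_iff[where e=e and \<omega>=\<omega>, OF assms(1)] by blast
    then show ?thesis using enat by simp
  qed simp
qed

lemma tau_zero:
  assumes "\<And>k. e (Suc k) \<omega> \<le> e k \<omega>" "e 0 \<omega> = e0"
  shows "tau_of e \<rho> e0 0 \<omega> = 0"
proof -
  have "tau_of e \<rho> e0 0 \<omega> \<le> enat 0" using tau_le_iff[where e=e and \<omega>=\<omega>, OF assms(1)] assms(2) by simp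
  then show ?thesis by (simp add: enat_0)
qed

lemma geo_sum:
  fixes \<rho> :: real and l :: nat
  assumes "0 < \<rho>" "\<rho> < 1"
  defines "f \<equiv> \<lambda>t. if t < l then 1 else \<rho>^(t-l)"
  shows "summable f" "suminf f = real l + 1/(1-\<rho>)"
proof -
  have sh: "(\<lambda>n. f (n + l)) = (\<lambda>n. \<rho>^n)" unfolding f_def by auto
  have sg: "summable (\<lambda>n. \<rho>^n)" using assms by (intro summable_geometric) simp
  then show sm: "summable f" using summable_iff_shift[of f l] sh by simp
  have "suminf f = (\<Sum>n. f (n + l)) + sum f {..<l}" by (rule suminf_split_initial_segment[OF sm])
  also have "(\<Sum>n. f (n + l)) = 1/(1-\<rho>)" unfolding sh using assms by (intro suminf_geometric) simp
  also have "sum f {..<l} = real l" unfolding f_def by simp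
  finally show "suminf f = real l + 1/(1-\<rho>)" by simp
qed

lemma generic_tau:
  fixes M :: "'a measure" and F :: "nat \<Rightarrow> 'a measure" and e :: "nat \<Rightarrow> 'a \<Rightarrow> real"
  assumes ps: "prob_space M" and sub: "\<And>k. subalgebra M (F k)"
    and emeas: "\<And>k. e k \<in> borel_measurable (F k)"
    and e0: "\<And>\<omega>. \<omega> \<in> space M \<Longrightarrow> e 0 \<omega> = e0"
    and enn: "\<And>k \<omega>. \<omega> \<in> space M \<Longrightarrow> 0 \<le> e k \<omega>"
    and emono: "\<And>k \<omega>. \<omega> \<in> space M \<Longrightarrow> e (Suc k) \<omega> \<le> e k \<omega>"
    and contr: "\<And>k. (\<integral>\<omega>. e (Suc k) \<omega> \<partial>M) \<le> \<rho> * (\<integral>\<omega>. e k \<omega> \<partial>M)"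
    and rho: "0 < \<rho>" "\<rho> < 1"
  shows "stopping_time (enat_filt M F) (tau_of e \<rho> e0 l)"
    and "(\<integral>\<^sup>+\<omega>. ennreal_of_enat (tau_of e \<rho> e0 l \<omega>) \<partial>M) \<le> ennreal (real l + 1/(1-\<rho>))"
    and "AE \<omega> in M. tau_of e \<rho> e0 l \<omega> \<noteq> \<infinity>"
proof -
  interpret prob_space M by (rule ps)
  have emM[measurable]: "e k \<in> borel_measurable M" for k by (rule measurable_from_subalg[OF sub emeas])
  have bnd: "e k \<omega> \<le> e0" if "\<omega> \<in> space M" for k \<omega>
    using that by (induction k) (auto intro: order_trans[OF emono] simp: e0)
  have e0nn: "0 \<le> e0" using enn[of _ 0] e0 not_empty by fastforce
  have int: "integrable M (e k)" for k
    by (rule integrable_const_bound[where B=e0]) (auto simp: bnd enn intro!: AE_I2)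
  have Eint: "(\<integral>\<omega>. e k \<omega> \<partial>M) \<le> \<rho>^k * e0" for k
  proof (induction k)
    case 0
    have "(\<integral>\<omega>. e 0 \<omega> \<partial>M) = (\<integral>\<omega>. e0 \<partial>M)" by (rule Bochner_Integration.integral_cong) (auto simp: e0)
    then show ?case by (simp add: prob_space)
  next
    case (Suc k)
    have "(\<integral>\<omega>. e (Suc k) \<omega> \<partial>M) \<le> \<rho> * (\<integral>\<omega>. e k \<omega> \<partial>M)" by (rule contr)
    also have "\<dots> \<le> \<rho> * (\<rho>^k * e0)" using Suc rho by (intro mult_left_mono) auto
    finally show ?case by simp
  qed
  define c where "c = \<rho>^l * e0"
  define f where "f = (\<lambda>t. if t < l then 1 else \<rho>^(t-l))"
  have markov: "measure M {\<omega>\<in>space M. e t \<omega> > c} \<le> f t" for t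
  proof (cases "e0 = 0")
    case True
    then have "{\<omega>\<in>space M. e t \<omega> > c} = {}" using bnd unfolding c_def by (auto simp: not_less)
    note emp = this
    show ?thesis unfolding f_def emp using rho by simp
  next
    case False
    then have cpos: "c > 0" unfolding c_def using e0nn rho by simp
    show ?thesis
    proof (cases "t < l")
      case True then show ?thesis unfolding f_def by simp
    next
      case False
      have "measure M {\<omega>\<in>space M. e t \<omega> > c} \<le> measure M {\<omega>\<in>space M. e t \<omega> \<ge> c}"
        by (intro finite_measure_mono) auto
      also have "\<dots> \<le> (\<integral>\<omega>. e t \<omega> \<partial>M) / c"
        by (rule integral_Markov_inequality_measure[OF int, where A="space M"]) (auto simp: enn cpos intro!: AE_I2)
      also have "\<dots> \<le> (\<rho>^t * e0) / c" using Eint cpos by (intro divide_right_mono) auto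
      also have "\<dots> = \<rho>^(t-l)" unfolding c_def using False \<open>e0 \<noteq> 0\<close> rho
        by (simp add: power_diff)
      finally show ?thesis unfolding f_def using False by simp
    qed
  qed
  define g where "g = (\<lambda>\<omega>. \<Sum>t. ennreal (indicator {\<omega>. e t \<omega> > c} \<omega>))"
  have gm: "g \<in> borel_measurable M"
  proof -
    have "(\<lambda>\<omega>. ennreal (indicator {\<omega>. e t \<omega> > c} \<omega>)) \<in> borel_measurable M" for t
      unfolding indicator_def by measurable
    then show ?thesis unfolding g_def by measurable
  qed
  have "(\<integral>\<^sup>+\<omega>. g \<omega> \<partial>M) = (\<Sum>t. \<integral>\<^sup>+\<omega>. ennreal (indicator {\<omega>. e t \<omega> > c} \<omega>) \<partial>M)"
    unfolding g_def by (rule nn_integral_suminf) (unfold indicator_def, measurable)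
  also have "\<dots> = (\<Sum>t. emeasure M {\<omega>\<in>space M. e t \<omega> > c})"
  proof (intro suminf_cong)
    fix t
    have "(\<integral>\<^sup>+\<omega>. ennreal (indicator {\<omega>. e t \<omega> > c} \<omega>) \<partial>M) = (\<integral>\<^sup>+\<omega>. indicator {\<omega>\<in>space M. e t \<omega> > c} \<omega> \<partial>M)"
      by (intro nn_integral_cong) (auto simp: indicator_def)
    also have "\<dots> = emeasure M {\<omega>\<in>space M. e t \<omega> > c}" by (intro nn_integral_indicator) measurable
    finally show "(\<integral>\<^sup>+\<omega>. ennreal (indicator {\<omega>. e t \<omega> > c} \<omega>) \<partial>M) = emeasure M {\<omega>\<in>space M. e t \<omega> > c}" .
  qed
  also have "\<dots> \<le> (\<Sum>t. ennreal (f t))"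
    by (intro suminf_le summableI) (auto simp: emeasure_eq_measure markov intro!: ennreal_leI)
  also have "\<dots> = ennreal (suminf f)"
    using geo_sum[OF rho, of l] unfolding f_def[symmetric]
    using rho by (intro suminf_ennreal2) (auto simp: f_def)
  also have "\<dots> = ennreal (real l + 1/(1-\<rho>))"
    using geo_sum[OF rho, of l] unfolding f_def[symmetric] by simp
  finally have gint: "(\<integral>\<^sup>+\<omega>. g \<omega> \<partial>M) \<le> ennreal (real l + 1/(1-\<rho>))" .
  have taug: "ennreal_of_enat (tau_of e \<rho> e0 l \<omega>) \<le> g \<omega>" for \<omega>
    unfolding g_def c_def by (rule tau_bound_sum)
  show "(\<integral>\<^sup>+\<omega>. ennreal_of_enat (tau_of e \<rho> e0 l \<omega>) \<partial>M) \<le> ennreal (real l + 1/(1-\<rho>))"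
    by (rule order_trans[OF nn_integral_mono[OF taug] gint])
  have "AE \<omega> in M. g \<omega> \<noteq> \<infinity>"
    by (rule nn_integral_noteq_infinite[OF gm]) (use gint in \<open>auto simp: top_unique\<close>)
  then show "AE \<omega> in M. tau_of e \<rho> e0 l \<omega> \<noteq> \<infinity>"
  proof (rule AE_mp, intro AE_I2 impI)
    fix \<omega> assume "g \<omega> \<noteq> \<infinity>"
    with taug[of \<omega>] show "tau_of e \<rho> e0 l \<omega> \<noteq> \<infinity>"
      by (metis ennreal_of_enat_infty infinity_ennreal_def top_unique)
  qed
  show "stopping_time (enat_filt M F) (tau_of e \<rho> e0 l)"
    unfolding stopping_time_def
  proof
    fix t :: enat
    show "Measurable.pred (enat_filt M F t) (\<lambda>\<omega>. tau_of e \<rho> e0 l \<omega> \<le> t)"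
    proof (cases t)
      case (enat k)
      have sp: "space (F k) = space M" using sub[of k] unfolding subalgebra_def by simp
      have p: "Measurable.pred (F k) (\<lambda>\<omega>. e k \<omega> \<le> \<rho>^l * e0)" using emeas[of k] by measurable
      have "{\<omega>\<in>space (F k). tau_of e \<rho> e0 l \<omega> \<le> enat k} = {\<omega>\<in>space (F k). e k \<omega> \<le> \<rho>^l * e0}"
      proof -
        have eq: "\<And>\<omega>. \<omega> \<in> space M \<Longrightarrow> (tau_of e \<rho> e0 l \<omega> \<le> enat k) = (e k \<omega> \<le> \<rho>^l * e0)"
          by (rule tau_le_iff) (rule emono)
        then show ?thesis unfolding sp by auto
      qed
      then show ?thesis using p unfolding enat enat_filt_def pred_def by simp
    next
      case infinity
      then show ?thesis unfolding enat_filt_def by simp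
    qed
  qed
qed



lemma mv_cont: fixes A :: "real^'d^'n" shows "continuous_on UNIV (\<lambda>y. A *v y - b)"
proof -
  have "continuous_on UNIV ((*v) A)" by (simp add: linear_continuous_on matrix_vector_mul_linear)
  then show ?thesis by (intro continuous_on_diff continuous_on_const) (simp add: o_def)
qed

lemma resid_meas2[measurable]: fixes A :: "real^'d^'n" shows "(\<lambda>y. A *v y - b) \<in> borel_measurable borel"
  by (rule borel_measurable_continuous_onI[OF mv_cont])

lemma resid_meas: fixes A :: "real^'d^'n" shows "(\<lambda>y. (A *v y - b) $ j) \<in> borel_measurable borel"
  by (rule borel_measurable_continuous_onI[OF continuous_on_component[OF mv_cont]])

lemma grk_set_mem: "j \<in> grk_set A b y \<longleftrightarrow> \<bar>(A *v y - b) $ j\<bar>\<^sup>2 \<ge> grk_eps A b y * (norm (A *v y - b))\<^sup>2 * (norm (A $ j))\<^sup>2"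
  by (simp add: grk_set_def)

lemma grk_eps_meas: "(\<lambda>y. grk_eps A b y) \<in> borel_measurable borel"
proof -
  have [measurable]: "(\<lambda>y. (A *v y - b) $ j) \<in> borel_measurable borel" for j by (rule resid_meas)
  show ?thesis unfolding grk_eps_def by measurable
qed

lemma grk_prob_meas: "(\<lambda>y. grk_prob A b y i) \<in> borel_measurable borel"
proof -
  have [measurable]: "(\<lambda>y. (A *v y - b) $ j) \<in> borel_measurable borel" for j by (rule resid_meas)
  have [measurable]: "(\<lambda>y. grk_eps A b y) \<in> borel_measurable borel" by (rule grk_eps_meas)
  have eq: "grk_prob A b y i = (if i \<in> grk_set A b y then \<bar>(A *v y - b) $ i\<bar>\<^sup>2 /
      (\<Sum>j\<in>UNIV. if j \<in> grk_set A b y then \<bar>(A *v y - b) $ j\<bar>\<^sup>2 else 0) else 0)" for y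
  proof -
    have "(\<Sum>j\<in>grk_set A b y. \<bar>(A *v y - b) $ j\<bar>\<^sup>2) = (\<Sum>j\<in>UNIV. if j \<in> grk_set A b y then \<bar>(A *v y - b) $ j\<bar>\<^sup>2 else 0)"
      using sum.inter_restrict[where A=UNIV and g= "\<lambda>j. \<bar>(A *v y - b) $ j\<bar>\<^sup>2" and B="grk_set A b y"] by simp
    then show ?thesis unfolding grk_prob_def by simp
  qed
  show ?thesis unfolding eq grk_set_mem by measurable
qed

lemma density_cond:
  fixes h :: "'a \<Rightarrow> ennreal"
  assumes ps: "prob_space M" and sub: "subalgebra M G" and Q: "Q \<in> sets M"
    and cond: "\<And>B. B \<in> sets G \<Longrightarrow> measure M (Q \<inter> B) = measure M B / C" and C: "0 < C"
    and h: "h \<in> borel_measurable G"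
  shows "(\<integral>\<^sup>+\<omega>. indicator Q \<omega> * h \<omega> \<partial>M) = ennreal (1/C) * (\<integral>\<^sup>+\<omega>. h \<omega> \<partial>M)"
proof -
  interpret prob_space M by (rule ps)
  have hM: "h \<in> borel_measurable M" by (rule measurable_from_subalg[OF sub h])
  define N1 where "N1 = density M (indicator Q)"
  define N2 where "N2 = density M (\<lambda>_. ennreal (1/C))"
  have sub1: "subalgebra N1 G" using sub unfolding N1_def subalgebra_def by simp
  have sub2: "subalgebra N2 G" using sub unfolding N2_def subalgebra_def by simp
  have GM: "B \<in> sets M" if "B \<in> sets G" for B using sub that unfolding subalgebra_def by auto
  have e1: "emeasure N1 B = ennreal (measure M B / C)" if B: "B \<in> sets G" for B
  proof -
    have "emeasure N1 B = (\<integral>\<^sup>+x. indicator Q x * indicator B x \<partial>M)"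
      unfolding N1_def using Q GM[OF B] by (intro emeasure_density) auto
    also have "\<dots> = (\<integral>\<^sup>+x. indicator (Q \<inter> B) x \<partial>M)"
      by (intro nn_integral_cong) (simp split: split_indicator)
    also have "\<dots> = emeasure M (Q \<inter> B)" using Q GM[OF B] by (intro nn_integral_indicator) auto
    also have "\<dots> = ennreal (measure M B / C)" using cond[OF B] by (simp add: emeasure_eq_measure)
    finally show ?thesis .
  qed
  have e2: "emeasure N2 B = ennreal (measure M B / C)" if B: "B \<in> sets G" for B
  proof -
    have "emeasure N2 B = (\<integral>\<^sup>+x. ennreal (1/C) * indicator B x \<partial>M)"
      unfolding N2_def using GM[OF B] by (intro emeasure_density) auto
    also have "\<dots> = ennreal (1/C) * emeasure M B" using GM[OF B] by (intro nn_integral_cmult_indicator) auto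
    also have "\<dots> = ennreal (measure M B / C)" using C
      by (simp add: emeasure_eq_measure ennreal_mult'[symmetric])
    finally show ?thesis .
  qed
  have eq: "restr_to_subalg N1 G = restr_to_subalg N2 G"
  proof (rule measure_eqI)
    show "sets (restr_to_subalg N1 G) = sets (restr_to_subalg N2 G)"
      by (simp add: sets_restr_to_subalg[OF sub1] sets_restr_to_subalg[OF sub2])
    fix B assume "B \<in> sets (restr_to_subalg N1 G)"
    then have B: "B \<in> sets G" by (simp add: sets_restr_to_subalg[OF sub1])
    show "emeasure (restr_to_subalg N1 G) B = emeasure (restr_to_subalg N2 G) B"
      using B by (simp add: emeasure_restr_to_subalg[OF sub1] emeasure_restr_to_subalg[OF sub2] e1 e2)
  qed
  have "(\<integral>\<^sup>+\<omega>. indicator Q \<omega> * h \<omega> \<partial>M) = (\<integral>\<^sup>+\<omega>. h \<omega> \<partial>N1)"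
    unfolding N1_def using Q hM by (intro nn_integral_density[symmetric]) auto
  also have "\<dots> = (\<integral>\<^sup>+\<omega>. h \<omega> \<partial>restr_to_subalg N1 G)" by (rule nn_integral_subalgebra2[OF sub1 h, symmetric])
  also have "\<dots> = (\<integral>\<^sup>+\<omega>. h \<omega> \<partial>restr_to_subalg N2 G)" unfolding eq ..
  also have "\<dots> = (\<integral>\<^sup>+\<omega>. h \<omega> \<partial>N2)" by (rule nn_integral_subalgebra2[OF sub2 h])
  also have "\<dots> = (\<integral>\<^sup>+\<omega>. ennreal (1/C) * h \<omega> \<partial>M)"
    unfolding N2_def using hM by (intro nn_integral_density) auto
  also have "\<dots> = ennreal (1/C) * (\<integral>\<^sup>+\<omega>. h \<omega> \<partial>M)" using hM by (rule nn_integral_cmult)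
  finally show ?thesis .
qed

lemma density_cond_real:
  fixes h :: "'a \<Rightarrow> real"
  assumes ps: "prob_space M" and sub: "subalgebra M G" and Q: "Q \<in> sets M"
    and cond: "\<And>B. B \<in> sets G \<Longrightarrow> measure M (Q \<inter> B) = measure M B / C" and C: "0 < C"
    and h: "h \<in> borel_measurable G" and hnn: "\<And>\<omega>. \<omega> \<in> space M \<Longrightarrow> 0 \<le> h \<omega>"
  shows "(\<integral>\<omega>. indicator Q \<omega> * h \<omega> \<partial>M) = (\<integral>\<omega>. h \<omega> \<partial>M) / C"
proof -
  have hM[measurable]: "h \<in> borel_measurable M" by (rule measurable_from_subalg[OF sub h])
  have hG: "(\<lambda>\<omega>. ennreal (h \<omega>)) \<in> borel_measurable G" using h by measurable
  have "(\<integral>\<omega>. indicator Q \<omega> * h \<omega> \<partial>M) = enn2real (\<integral>\<^sup>+\<omega>. ennreal (indicator Q \<omega> * h \<omega>) \<partial>M)"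
    using Q by (intro integral_eq_nn_integral) (auto intro!: AE_I2 simp: hnn)
  also have "(\<integral>\<^sup>+\<omega>. ennreal (indicator Q \<omega> * h \<omega>) \<partial>M) = (\<integral>\<^sup>+\<omega>. indicator Q \<omega> * ennreal (h \<omega>) \<partial>M)"
    by (intro nn_integral_cong) (simp split: split_indicator)
  also have "\<dots> = ennreal (1/C) * (\<integral>\<^sup>+\<omega>. ennreal (h \<omega>) \<partial>M)"
    by (rule density_cond[OF ps sub Q cond C hG])
  also have "enn2real \<dots> = (1/C) * enn2real (\<integral>\<^sup>+\<omega>. ennreal (h \<omega>) \<partial>M)"
    using C by (simp add: enn2real_mult)
  also have "enn2real (\<integral>\<^sup>+\<omega>. ennreal (h \<omega>) \<partial>M) = (\<integral>\<omega>. h \<omega> \<partial>M)"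
    by (intro integral_eq_nn_integral[symmetric]) (auto intro!: AE_I2 simp: hnn)
  finally show ?thesis by simp
qed



locale kz =
  fixes M :: "'a measure" and F :: "nat \<Rightarrow> 'a measure" and A :: "real^'d^'n" and b :: "real^'n"
    and p x0 :: "real^'d" and x :: "nat \<Rightarrow> 'a \<Rightarrow> real^'d" and w :: "nat \<Rightarrow> 'a \<Rightarrow> real^'n" and \<sigma> :: real
  assumes ps: "prob_space M" and sub: "\<And>k. subalgebra M (F k)"
    and pb: "A *v p = b" and sigpos: "0 < \<sigma>"
    and sig: "\<And>v. orth A v \<Longrightarrow> \<sigma> * (norm v)\<^sup>2 \<le> (norm (A *v v))\<^sup>2"
    and orth0: "orth A (x0 - p)"
    and x0: "\<And>\<omega>. \<omega> \<in> space M \<Longrightarrow> x 0 \<omega> = x0"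
    and step: "\<And>k \<omega>. \<omega> \<in> space M \<Longrightarrow> x (Suc k) \<omega> = kacz_step A b (x k \<omega>) (w k \<omega>)"
    and waxis: "\<And>k \<omega>. \<omega> \<in> space M \<Longrightarrow> \<exists>i. w k \<omega> = axis i 1"
    and xmeas: "\<And>k. x k \<in> borel_measurable (F k)"
    and wmeas: "\<And>k. w k \<in> borel_measurable (F (Suc k))"
begin

definition e :: "nat \<Rightarrow> 'a \<Rightarrow> real" where "e k \<omega> = (norm (x k \<omega> - p))\<^sup>2"

definition R :: "nat \<Rightarrow> 'n \<Rightarrow> 'a \<Rightarrow> real" where "R k j \<omega> = ((A *v x k \<omega> - b) $ j)\<^sup>2"

definition K :: real where "K = frob_sq A + 1"

lemma Kpos: "0 < K" unfolding K_def using frob_nn[of A] by linarith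

lemma orthk: "\<omega> \<in> space M \<Longrightarrow> orth A (x k \<omega> - p)"
proof (induction k)
  case 0 then show ?case using x0 orth0 by simp
next
  case (Suc k)
  obtain i where i: "w k \<omega> = axis i 1" using waxis[OF Suc.prems] by blast
  show ?case unfolding step[OF Suc.prems] i by (rule step_orth[OF pb Suc.IH[OF Suc.prems]])
qed

lemma estep: "\<omega> \<in> space M \<Longrightarrow> w k \<omega> = axis i 1 \<Longrightarrow>
    e (Suc k) \<omega> = e k \<omega> - (A$i \<bullet> (x k \<omega> - p))\<^sup>2 / (norm (A$i))\<^sup>2"
  unfolding e_def by (simp add: step step_norm[OF pb])

lemma enn: "0 \<le> e k \<omega>" unfolding e_def by simp

lemma emono: "\<omega> \<in> space M \<Longrightarrow> e (Suc k) \<omega> \<le> e k \<omega>"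
proof -
  assume o: "\<omega> \<in> space M"
  obtain i where i: "w k \<omega> = axis i 1" using waxis[OF o] by blast
  show ?thesis unfolding estep[OF o i] by simp
qed

lemma ebnd: "\<omega> \<in> space M \<Longrightarrow> e k \<omega> \<le> (norm (x0 - p))\<^sup>2"
proof (induction k)
  case 0 then show ?case using x0 unfolding e_def by simp
next
  case (Suc k) then show ?case using emono[OF Suc.prems, of k] by simp
qed

lemma res_sig: "\<omega> \<in> space M \<Longrightarrow> \<sigma> * e k \<omega> \<le> (norm (A *v x k \<omega> - b))\<^sup>2"
proof -
  assume o: "\<omega> \<in> space M"
  have "A *v x k \<omega> - b = A *v (x k \<omega> - p)" using pb by (simp add: matrix_vector_mult_diff_distrib)
  then show ?thesis unfolding e_def using sig[OF orthk[OF o]] by simp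
qed

lemma resnorm_R: "(norm (A *v x k \<omega> - b))\<^sup>2 = (\<Sum>j\<in>UNIV. R k j \<omega>)"
  unfolding R_def by (rule norm_sq_sum)

lemma emeasF[measurable]: "e k \<in> borel_measurable (F k)"
proof -
  have [measurable]: "x k \<in> borel_measurable (F k)" by (rule xmeas)
  show ?thesis unfolding e_def[abs_def] by measurable
qed

lemma emeasM[measurable]: "e k \<in> borel_measurable M"
  by (rule measurable_from_subalg[OF sub emeasF])

lemma RmeasF[measurable]: "R k j \<in> borel_measurable (F k)"
proof -
  have [measurable]: "(\<lambda>\<omega>. (A *v x k \<omega> - b) $ j) \<in> borel_measurable (F k)"
    using measurable_compose[OF xmeas resid_meas] by simp
  show ?thesis unfolding R_def[abs_def] by measurable
qed

lemma RmeasM[measurable]: "R k j \<in> borel_measurable M"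
  by (rule measurable_from_subalg[OF sub RmeasF])

lemma Rbnd: "\<omega> \<in> space M \<Longrightarrow> R k j \<omega> \<le> K * (norm (x0 - p))\<^sup>2"
proof -
  assume o: "\<omega> \<in> space M"
  have "R k j \<omega> = (A$j \<bullet> (x k \<omega> - p))\<^sup>2" unfolding R_def resid_eq[OF pb] ..
  also have "\<dots> = \<bar>A$j \<bullet> (x k \<omega> - p)\<bar>\<^sup>2" by simp
  also have "\<dots> \<le> (norm (A$j) * norm (x k \<omega> - p))\<^sup>2"
    by (intro power_mono Cauchy_Schwarz_ineq2) simp
  also have "\<dots> = (norm (A$j))\<^sup>2 * e k \<omega>" unfolding e_def by (simp add: power_mult_distrib)
  also have "\<dots> \<le> K * (norm (x0 - p))\<^sup>2"
    using row_le_frob[of A j] ebnd[OF o, of k] enn[of k \<omega>] Kpos unfolding K_def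
    by (intro mult_mono) auto
  finally show ?thesis .
qed

lemma Rnn: "0 \<le> R k j \<omega>" unfolding R_def by simp

lemma eint: "integrable M (e k)"
proof -
  interpret prob_space M by (rule ps)
  show ?thesis
    by (rule integrable_const_bound[where B="(norm (x0 - p))\<^sup>2"]) (auto intro!: AE_I2 simp: ebnd enn)
qed

lemma Rint: "integrable M (R k j)"
proof -
  interpret prob_space M by (rule ps)
  show ?thesis
    by (rule integrable_const_bound[where B="K * (norm (x0 - p))\<^sup>2"]) (auto intro!: AE_I2 simp: Rbnd Rnn)
qed

lemma contr_pointwise:
  assumes c: "\<And>k \<omega>. \<omega> \<in> space M \<Longrightarrow> e (Suc k) \<omega> \<le> (1 - c) * e k \<omega>"
  shows "(\<integral>\<omega>. e (Suc k) \<omega> \<partial>M) \<le> (1 - c) * (\<integral>\<omega>. e k \<omega> \<partial>M)"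
proof -
  have "(\<integral>\<omega>. e (Suc k) \<omega> \<partial>M) \<le> (\<integral>\<omega>. (1 - c) * e k \<omega> \<partial>M)"
    by (intro integral_mono eint integrable_mult_right c)
  then show ?thesis by simp
qed

lemma contr_maxres:
  assumes cond: "\<forall>k. \<forall>\<omega>\<in>space M. \<exists>i. w k \<omega> = axis i 1 \<and>
              (\<forall>j. \<bar>(A *v x k \<omega> - b) $ j\<bar> \<le> \<bar>(A *v x k \<omega> - b) $ i\<bar>)"
  shows "\<exists>c>0. \<forall>k. (\<integral>\<omega>. e (Suc k) \<omega> \<partial>M) \<le> (1 - c) * (\<integral>\<omega>. e k \<omega> \<partial>M)"
proof (intro exI[of _ "\<sigma> / (real CARD('n) * K)"] conjI allI contr_pointwise)
  show "0 < \<sigma> / (real CARD('n) * K)" using sigpos Kpos by simp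
  fix k \<omega> assume o: "\<omega> \<in> space M"
  obtain i where i: "w k \<omega> = axis i 1" "\<forall>j. \<bar>(A *v x k \<omega> - b) $ j\<bar> \<le> \<bar>(A *v x k \<omega> - b) $ i\<bar>"
    using cond o by blast
  have "\<sigma> * e k \<omega> / (real CARD('n) * K) \<le> (norm (A *v x k \<omega> - b))\<^sup>2 / (real CARD('n) * K)"
    using res_sig[OF o] Kpos by (intro divide_right_mono) auto
  also have "\<dots> \<le> (A$i \<bullet> (x k \<omega> - p))\<^sup>2 / (norm (A$i))\<^sup>2"
    unfolding K_def by (rule maxres_prog[OF pb i(2)])
  finally show "e (Suc k) \<omega> \<le> (1 - \<sigma> / (real CARD('n) * K)) * e k \<omega>"
    unfolding estep[OF o i(1)] by (simp add: algebra_simps)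
qed

lemma contr_maxdist:
  assumes cond: "\<forall>k. \<forall>\<omega>\<in>space M. \<exists>i. w k \<omega> = axis i 1 \<and>
              (\<forall>j. \<bar>(A *v x k \<omega> - b) $ j\<bar> / (norm (A $ j))\<^sup>2
                     \<le> \<bar>(A *v x k \<omega> - b) $ i\<bar> / (norm (A $ i))\<^sup>2)"
  shows "\<exists>c>0. \<forall>k. (\<integral>\<omega>. e (Suc k) \<omega> \<partial>M) \<le> (1 - c) * (\<integral>\<omega>. e k \<omega> \<partial>M)"
proof (intro exI[of _ "\<sigma> * minrow A / (real CARD('n) * K^2)"] conjI allI contr_pointwise)
  show "0 < \<sigma> * minrow A / (real CARD('n) * K^2)" using sigpos Kpos minrow_pos[of A] by simp
  fix k \<omega> assume o: "\<omega> \<in> space M"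
  obtain i where i: "w k \<omega> = axis i 1" "\<forall>j. \<bar>(A *v x k \<omega> - b) $ j\<bar> / (norm (A $ j))\<^sup>2
                     \<le> \<bar>(A *v x k \<omega> - b) $ i\<bar> / (norm (A $ i))\<^sup>2"
    using cond o by blast
  have "\<sigma> * minrow A / (real CARD('n) * K^2) * e k \<omega> = minrow A * (\<sigma> * e k \<omega>) / (real CARD('n) * K^2)"
    by simp
  also have "\<dots> \<le> minrow A * (norm (A *v x k \<omega> - b))\<^sup>2 / (real CARD('n) * K^2)"
    using res_sig[OF o] Kpos minrow_pos[of A] by (intro divide_right_mono mult_left_mono) auto
  also have "\<dots> \<le> (A$i \<bullet> (x k \<omega> - p))\<^sup>2 / (norm (A$i))\<^sup>2"
    unfolding K_def by (rule maxdist_prog[OF pb i(2)])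
  finally show "e (Suc k) \<omega> \<le> (1 - \<sigma> * minrow A / (real CARD('n) * K^2)) * e k \<omega>"
    unfolding estep[OF o i(1)] by (simp add: algebra_simps)
qed

end



context kz begin

lemma contr_grk:
  assumes cond: "\<forall>k i. \<forall>B\<in>sets (F k).
              measure M ({\<omega>\<in>space M. w k \<omega> = axis i 1 \<and> A *v x k \<omega> \<noteq> b} \<inter> B)
              = (LINT \<omega>:B|M. (if A *v x k \<omega> \<noteq> b then grk_prob A b (x k \<omega>) i else 0))"
  shows "\<exists>c>0. \<forall>k. (\<integral>\<omega>. e (Suc k) \<omega> \<partial>M) \<le> (1 - c) * (\<integral>\<omega>. e k \<omega> \<partial>M)"
proof (intro exI[of _ "\<sigma> / (2 * K)"] conjI allI)
  show "0 < \<sigma> / (2 * K)" using sigpos Kpos by simp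
  fix k
  interpret prob_space M by (rule ps)
  have xM[measurable]: "x k \<in> borel_measurable M" by (rule measurable_from_subalg[OF sub xmeas])
  have wM[measurable]: "w k \<in> borel_measurable M" by (rule measurable_from_subalg[OF sub wmeas])
  have spF: "space (F k) = space M" using sub[of k] unfolding subalgebra_def by simp
  define B where "B i = {\<omega>\<in>space M. grk_prob A b (x k \<omega>) i = 0}" for i
  have BF: "B i \<in> sets (F k)" for i
  proof -
    have [measurable]: "(\<lambda>\<omega>. grk_prob A b (x k \<omega>) i) \<in> borel_measurable (F k)"
      by (rule measurable_compose[OF xmeas grk_prob_meas])
    have "{\<omega>\<in>space (F k). grk_prob A b (x k \<omega>) i = 0} \<in> sets (F k)" by measurable
    then show ?thesis unfolding B_def spF .
  qed
  have BM: "B i \<in> sets M" for i using BF sub[of k] unfolding subalgebra_def by auto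
  define N where "N i = {\<omega>\<in>space M. w k \<omega> = axis i 1 \<and> A *v x k \<omega> \<noteq> b} \<inter> B i" for i
  have NM: "N i \<in> sets M" for i
  proof -
    have s1: "w k -` {axis i 1} \<inter> space M \<in> sets M"
      by (intro measurable_sets[OF wM] borel_closed) simp
    have rM: "(\<lambda>\<omega>. A *v x k \<omega> - b) \<in> borel_measurable M" by (rule measurable_compose[OF xM resid_meas2])
    have s2: "(\<lambda>\<omega>. A *v x k \<omega> - b) -` {0} \<inter> space M \<in> sets M"
      by (intro measurable_sets[OF rM] borel_closed) simp
    have "{\<omega>\<in>space M. w k \<omega> = axis i 1 \<and> A *v x k \<omega> \<noteq> b} = (w k -` {axis i 1} \<inter> space M) - ((\<lambda>\<omega>. A *v x k \<omega> - b) -` {0} \<inter> space M)"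
      by auto
    then have "{\<omega>\<in>space M. w k \<omega> = axis i 1 \<and> A *v x k \<omega> \<noteq> b} \<in> sets M" using s1 s2 by simp
    then show ?thesis unfolding N_def using BM by auto
  qed
  have N0: "measure M (N i) = 0" for i
  proof -
    have "measure M (N i) = (LINT \<omega>:B i|M. (if A *v x k \<omega> \<noteq> b then grk_prob A b (x k \<omega>) i else 0))"
      unfolding N_def using cond BF by blast
    also have "(\<lambda>\<omega>. indicator (B i) \<omega> *\<^sub>R (if A *v x k \<omega> \<noteq> b then grk_prob A b (x k \<omega>) i else 0)) = (\<lambda>\<omega>. 0)"
      by (rule ext) (auto simp: B_def split: split_indicator)
    then have "(LINT \<omega>:B i|M. (if A *v x k \<omega> \<noteq> b then grk_prob A b (x k \<omega>) i else 0)) = 0"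
      unfolding set_lebesgue_integral_def by simp
    finally show ?thesis .
  qed
  have AEN: "AE \<omega> in M. \<forall>i\<in>UNIV. \<omega> \<notin> N i"
  proof (rule AE_finite_allI)
    fix i
    have "N i \<in> null_sets M" using NM N0 by (intro null_setsI) (auto simp: emeasure_eq_measure)
    then show "AE \<omega> in M. \<omega> \<notin> N i" by (rule AE_not_in)
  qed simp
  have AEc: "AE \<omega> in M. e (Suc k) \<omega> \<le> (1 - \<sigma> / (2 * K)) * e k \<omega>"
  proof (rule AE_mp[OF AEN], rule AE_I2, rule impI)
    fix \<omega> assume o: "\<omega> \<in> space M" and nn: "\<forall>i\<in>UNIV. \<omega> \<notin> N i"
    obtain i where i: "w k \<omega> = axis i 1" using waxis[OF o] by blast
    show "e (Suc k) \<omega> \<le> (1 - \<sigma> / (2 * K)) * e k \<omega>"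
    proof (cases "A *v x k \<omega> = b")
      case True
      then have "\<sigma> * e k \<omega> \<le> 0" using res_sig[OF o, of k] by simp
      then have "e k \<omega> = 0" using sigpos enn[of k \<omega>] by (simp add: mult_le_0_iff)
      then show ?thesis using emono[OF o, of k] enn[of "Suc k" \<omega>] by simp
    next
      case False
      then have "\<omega> \<notin> B i" using nn o i unfolding N_def by auto
      then have g: "grk_prob A b (x k \<omega>) i \<noteq> 0" using o unfolding B_def by auto
      have "\<sigma> / (2 * K) * e k \<omega> = (\<sigma> * e k \<omega>) / (2 * (frob_sq A + 1))" unfolding K_def by simp
      also have "\<dots> \<le> (norm (A *v x k \<omega> - b))\<^sup>2 / (2 * (frob_sq A + 1))"
        using res_sig[OF o] Kpos unfolding K_def by (intro divide_right_mono) auto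
      also have "\<dots> \<le> (A$i \<bullet> (x k \<omega> - p))\<^sup>2 / (norm (A$i))\<^sup>2" by (rule grk_prog[OF pb g])
      finally show ?thesis unfolding estep[OF o i] by (simp add: algebra_simps)
    qed
  qed
  have "(\<integral>\<omega>. e (Suc k) \<omega> \<partial>M) \<le> (\<integral>\<omega>. (1 - \<sigma> / (2 * K)) * e k \<omega> \<partial>M)"
    by (intro integral_mono_AE eint integrable_mult_right AEc)
  then show "(\<integral>\<omega>. e (Suc k) \<omega> \<partial>M) \<le> (1 - \<sigma> / (2 * K)) * (\<integral>\<omega>. e k \<omega> \<partial>M)" by simp
qed

end



lemma exists_T:
  fixes j :: "'n::finite"
  assumes "1 \<le> \<psi>" "\<psi> \<le> CARD('n)"
  shows "\<exists>T. j \<in> T \<and> card T = \<psi>"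
proof -
  have "card (UNIV - {j}) = CARD('n) - 1" by (simp add: card_Diff_singleton)
  then have "\<psi> - 1 \<le> card (UNIV - {j})" using assms by simp
  then obtain U where U: "U \<subseteq> UNIV - {j}" "card U = \<psi> - 1" "finite U"
    by (rule obtain_subset_with_card_n)
  have "j \<notin> U" using U(1) by auto
  then have "card (insert j U) = Suc (\<psi> - 1)" using U(2,3) by simp
  then have "card (insert j U) = \<psi>" using assms by simp
  then show ?thesis by blast
qed

lemma ar1: "0 < (n::real) \<Longrightarrow> 0 < K \<Longrightarrow> X / K \<le> n * pr \<Longrightarrow> 1 / (n * K) * X \<le> pr"
  by (simp add: field_simps mult.commute)

lemma ar2: "(a::real) - 1 / (n * K) * (s * a / C) = (1 - s / (n * K * C)) * a"
  by (simp add: field_simps)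

context kz begin

lemma contr_skm:
  fixes S :: "nat \<Rightarrow> 'a \<Rightarrow> 'n set"
  assumes psi: "1 \<le> \<psi>" "\<psi> \<le> CARD('n)"
    and Smeas: "\<forall>k T. {\<omega>\<in>space M. S k \<omega> = T} \<in> sets (F (Suc k))"
    and Scond: "\<forall>k T. \<forall>B\<in>sets (F k). card T = \<psi> \<longrightarrow>
                 measure M ({\<omega>\<in>space M. S k \<omega> = T} \<inter> B)
                 = measure M B / real (CARD('n) choose \<psi>)"
    and Smax: "\<forall>k. \<forall>\<omega>\<in>space M. \<exists>i\<in>S k \<omega>. w k \<omega> = axis i 1 \<and>
                 (\<forall>j\<in>S k \<omega>. \<bar>(A *v x k \<omega> - b) $ j\<bar> \<le> \<bar>(A *v x k \<omega> - b) $ i\<bar>)"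
  shows "\<exists>c>0. \<forall>k. (\<integral>\<omega>. e (Suc k) \<omega> \<partial>M) \<le> (1 - c) * (\<integral>\<omega>. e k \<omega> \<partial>M)"
proof -
  define C where "C = real (CARD('n) choose \<psi>)"
  define n where "n = real CARD('n)"
  have Cpos: "0 < C" unfolding C_def using psi by simp
  have npos: "0 < n" unfolding n_def using zero_less_card_finite[where 'a='n] by linarith
  have ex: "\<exists>T. j \<in> T \<and> card T = \<psi>" for j :: 'n
    using exists_T[of \<psi> j] psi by simp
  have "\<forall>j::'n. \<exists>T. j \<in> T \<and> card T = \<psi>" using ex by simp
  then obtain T where T0: "\<forall>j::'n. j \<in> T j \<and> card (T j) = \<psi>" by (rule choice[THEN exE])
  have T: "\<And>j. j \<in> T j" "\<And>j. card (T j) = \<psi>" using T0 by simp_all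
  show ?thesis
  proof (intro exI[of _ "\<sigma> / (n * K * C)"] conjI allI)
    show "0 < \<sigma> / (n * K * C)" using sigpos Kpos Cpos npos by simp
    fix k
    interpret prob_space M by (rule ps)
    define Q where "Q j = {\<omega>\<in>space M. S k \<omega> = T j}" for j
    have QM: "Q j \<in> sets M" for j
    proof -
      have "Q j \<in> sets (F (Suc k))" unfolding Q_def using Smeas by simp
      then show ?thesis using sub[of "Suc k"] unfolding subalgebra_def by blast
    qed
    have Qc: "measure M (Q j \<inter> B) = measure M B / C" if "B \<in> sets (F k)" for j B
      using Scond[rule_format, OF that T(2)] unfolding Q_def C_def .
    have QR: "(\<integral>\<omega>. indicator (Q j) \<omega> * R k j \<omega> \<partial>M) = (\<integral>\<omega>. R k j \<omega> \<partial>M) / C" for j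
      by (rule density_cond_real[OF ps sub QM Qc Cpos RmeasF Rnn])
    have pt: "e (Suc k) \<omega> \<le> e k \<omega> - (1 / (n * K)) * (\<Sum>j\<in>UNIV. indicator (Q j) \<omega> * R k j \<omega>)"
      if o: "\<omega> \<in> space M" for \<omega>
    proof -
      obtain i where i: "i \<in> S k \<omega>" "w k \<omega> = axis i 1"
        "\<forall>j\<in>S k \<omega>. \<bar>(A *v x k \<omega> - b) $ j\<bar> \<le> \<bar>(A *v x k \<omega> - b) $ i\<bar>"
        using Smax o by blast
      define pr where "pr = (A$i \<bullet> (x k \<omega> - p))\<^sup>2 / (norm (A$i))\<^sup>2"
      have each: "indicator (Q j) \<omega> * R k j \<omega> / K \<le> pr" for j
      proof (cases "\<omega> \<in> Q j")
        case True
        then have "j \<in> S k \<omega>" using T(1)[of j] unfolding Q_def by auto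
        from skm_prog[OF pb i(3) this] show ?thesis using True unfolding pr_def R_def K_def by simp
      next
        case False then show ?thesis unfolding pr_def by simp
      qed
      have "(\<Sum>j\<in>UNIV. indicator (Q j) \<omega> * R k j \<omega> / K) \<le> of_nat (card (UNIV::'n set)) * pr"
        by (rule sum_bounded_above) (rule each)
      then have "(\<Sum>j\<in>UNIV. indicator (Q j) \<omega> * R k j \<omega>) / K \<le> n * pr"
        unfolding n_def sum_divide_distrib .
      then have "(1 / (n * K)) * (\<Sum>j\<in>UNIV. indicator (Q j) \<omega> * R k j \<omega>) \<le> pr"
        by (rule ar1[OF npos Kpos])
      then show ?thesis unfolding estep[OF o i(2)] pr_def by simp
    qed
    have intQR: "integrable M (\<lambda>\<omega>. indicator (Q j) \<omega> * R k j \<omega>)" for j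
      using integrable_real_mult_indicator[OF QM Rint] by (simp add: mult.commute)
    have "(\<integral>\<omega>. e (Suc k) \<omega> \<partial>M) \<le> (\<integral>\<omega>. e k \<omega> - (1 / (n * K)) * (\<Sum>j\<in>UNIV. indicator (Q j) \<omega> * R k j \<omega>) \<partial>M)"
      by (intro integral_mono eint Bochner_Integration.integrable_diff integrable_mult_right
          Bochner_Integration.integrable_sum intQR pt)
    also have "\<dots> = (\<integral>\<omega>. e k \<omega> \<partial>M) - (1 / (n * K)) * (\<Sum>j\<in>UNIV. \<integral>\<omega>. indicator (Q j) \<omega> * R k j \<omega> \<partial>M)"
    proof -
      have int2: "integrable M (\<lambda>\<omega>. \<Sum>j\<in>UNIV. indicator (Q j) \<omega> * R k j \<omega>)"
        by (intro Bochner_Integration.integrable_sum intQR)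
      have "(\<integral>\<omega>. e k \<omega> - (1 / (n * K)) * (\<Sum>j\<in>UNIV. indicator (Q j) \<omega> * R k j \<omega>) \<partial>M)
          = (\<integral>\<omega>. e k \<omega> \<partial>M) - (\<integral>\<omega>. (1 / (n * K)) * (\<Sum>j\<in>UNIV. indicator (Q j) \<omega> * R k j \<omega>) \<partial>M)"
        by (rule Bochner_Integration.integral_diff[OF eint integrable_mult_right[OF int2]])
      also have "(\<integral>\<omega>. (1 / (n * K)) * (\<Sum>j\<in>UNIV. indicator (Q j) \<omega> * R k j \<omega>) \<partial>M)
          = (1 / (n * K)) * (\<integral>\<omega>. (\<Sum>j\<in>UNIV. indicator (Q j) \<omega> * R k j \<omega>) \<partial>M)"
        by (rule integral_mult_right_zero)
      also have "(\<integral>\<omega>. (\<Sum>j\<in>UNIV. indicator (Q j) \<omega> * R k j \<omega>) \<partial>M) = (\<Sum>j\<in>UNIV. \<integral>\<omega>. indicator (Q j) \<omega> * R k j \<omega> \<partial>M)"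
        by (rule Bochner_Integration.integral_sum) (rule intQR)
      finally show ?thesis .
    qed
    also have "(\<Sum>j\<in>UNIV. \<integral>\<omega>. indicator (Q j) \<omega> * R k j \<omega> \<partial>M) = (\<integral>\<omega>. (\<Sum>j\<in>UNIV. R k j \<omega>) \<partial>M) / C"
      by (simp add: QR Bochner_Integration.integral_sum Rint sum_divide_distrib)
    also have "(\<integral>\<omega>. (\<Sum>j\<in>UNIV. R k j \<omega>) \<partial>M) \<ge> (\<integral>\<omega>. \<sigma> * e k \<omega> \<partial>M)"
      by (intro integral_mono integrable_mult_right eint Bochner_Integration.integrable_sum Rint)
         (simp add: res_sig resnorm_R[symmetric])
    then have "(\<integral>\<omega>. e k \<omega> \<partial>M) - (1 / (n * K)) * ((\<integral>\<omega>. (\<Sum>j\<in>UNIV. R k j \<omega>) \<partial>M) / C)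
        \<le> (\<integral>\<omega>. e k \<omega> \<partial>M) - (1 / (n * K)) * ((\<integral>\<omega>. \<sigma> * e k \<omega> \<partial>M) / C)"
      using npos Kpos Cpos by (intro diff_left_mono mult_left_mono divide_right_mono) auto
    also have "\<dots> = (\<integral>\<omega>. e k \<omega> \<partial>M) - (1 / (n * K)) * (\<sigma> * (\<integral>\<omega>. e k \<omega> \<partial>M) / C)"
      by simp
    also have "\<dots> = (1 - \<sigma> / (n * K * C)) * (\<integral>\<omega>. e k \<omega> \<partial>M)"
      by (rule ar2)
    finally show "(\<integral>\<omega>. e (Suc k) \<omega> \<partial>M) \<le> (1 - \<sigma> / (n * K * C)) * (\<integral>\<omega>. e k \<omega> \<partial>M)" .
  qed
qed

end



theorem mainTheorem17:
  fixes M :: "'a measure" and F :: "nat \<Rightarrow> 'a measure" and m :: adaptive_method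
    and A :: "real^'d^'n" and b :: "real^'n" and x0 :: "real^'d"
    and x :: "nat \<Rightarrow> 'a \<Rightarrow> real^'d" and w :: "nat \<Rightarrow> 'a \<Rightarrow> real^'n"
  assumes consistent: "\<exists>xs. A *v xs = b"
    and gen: "generated_by M F m A b x0 x w"
  shows "\<exists>\<gamma>::real. 0 \<le> \<gamma> \<and> \<gamma> < 1 \<and>
    (\<exists>\<tau> :: nat \<Rightarrow> 'a \<Rightarrow> enat.
       (\<forall>l. stopping_time (enat_filt M F) (\<tau> l)) \<and>
       (\<forall>\<omega>\<in>space M. mono (\<lambda>l. \<tau> l \<omega>)) \<and>
       (let H = sol_set A b; p = closest_point (sol_set A b) x0;
            E1 = {\<omega>\<in>space M. \<exists>l. \<tau> l \<omega> \<noteq> \<infinity> \<and> x (the_enat (\<tau> l \<omega>) + 1) \<omega> \<in> H};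
            E2 = {\<omega>\<in>space M. \<forall>l. \<tau> l \<omega> \<noteq> \<infinity> \<and>
                    (norm (x (the_enat (\<tau> l \<omega>) + 1) \<omega> - p))\<^sup>2 \<le> \<gamma> ^ l * (norm (x0 - p))\<^sup>2}
        in measure M (E1 \<union> E2) = 1 \<and>
           (\<forall>l. (\<integral>\<^sup>+\<omega>. indicator {\<omega>\<in>space M. \<tau> l \<omega> \<noteq> \<infinity> \<and>
                                   x (the_enat (\<tau> l \<omega>) + 1) \<omega> \<in> H} \<omega>
                         * ennreal_of_enat (\<tau> l \<omega>) \<partial>M) < \<infinity>) \<and>
           (\<forall>l. (\<integral>\<^sup>+\<omega>. indicator E2 \<omega> * ennreal_of_enat (\<tau> l \<omega>) \<partial>M) < \<infinity>)) \<and>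
       (\<exists>\<kappa>::real. \<forall>l. (AE \<omega> in M. \<tau> l \<omega> \<noteq> \<infinity>) \<longrightarrow>
            (\<integral>\<^sup>+\<omega>. ennreal_of_enat (\<tau> l \<omega>) \<partial>M) \<le> ennreal (real l * \<kappa>)))"
  proof -
  have ps: "prob_space M" and sub: "\<And>k. subalgebra M (F k)"
    and x0: "\<And>\<omega>. \<omega> \<in> space M \<Longrightarrow> x 0 \<omega> = x0"
    and step: "\<And>k \<omega>. \<omega> \<in> space M \<Longrightarrow> x (Suc k) \<omega> = kacz_step A b (x k \<omega>) (w k \<omega>)"
    and xmeas: "\<And>k. x k \<in> borel_measurable (F k)"
    and wmeas: "\<And>k. w k \<in> borel_measurable (F (Suc k))"
    and waxis: "\<And>k \<omega>. \<omega> \<in> space M \<Longrightarrow> \<exists>i. w k \<omega> = axis i 1"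
    using gen unfolding generated_by_def by blast+
  have mcond: "case m of
        MaxResidual \<Rightarrow>
          (\<forall>k. \<forall>\<omega>\<in>space M. \<exists>i. w k \<omega> = axis i 1 \<and>
              (\<forall>j. \<bar>(A *v x k \<omega> - b) $ j\<bar> \<le> \<bar>(A *v x k \<omega> - b) $ i\<bar>))
      | MaxDistance \<Rightarrow>
          (\<forall>k. \<forall>\<omega>\<in>space M. \<exists>i. w k \<omega> = axis i 1 \<and>
              (\<forall>j. \<bar>(A *v x k \<omega> - b) $ j\<bar> / (norm (A $ j))\<^sup>2
                     \<le> \<bar>(A *v x k \<omega> - b) $ i\<bar> / (norm (A $ i))\<^sup>2))
      | GRK \<Rightarrow>
          (\<forall>k i. \<forall>B\<in>sets (F k).
              measure M ({\<omega>\<in>space M. w k \<omega> = axis i 1 \<and> A *v x k \<omega> \<noteq> b} \<inter> B)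
              = (LINT \<omega>:B|M. (if A *v x k \<omega> \<noteq> b then grk_prob A b (x k \<omega>) i else 0)))
      | SKM \<psi> \<Rightarrow>
          1 \<le> \<psi> \<and> \<psi> \<le> CARD('n) \<and>
          (\<exists>S :: nat \<Rightarrow> 'a \<Rightarrow> 'n set.
             (\<forall>k T. {\<omega>\<in>space M. S k \<omega> = T} \<in> sets (F (Suc k))) \<and>
             (\<forall>k T. \<forall>B\<in>sets (F k). card T = \<psi> \<longrightarrow>
                 measure M ({\<omega>\<in>space M. S k \<omega> = T} \<inter> B)
                 = measure M B / real (CARD('n) choose \<psi>)) \<and>
             (\<forall>k. \<forall>\<omega>\<in>space M. \<exists>i\<in>S k \<omega>. w k \<omega> = axis i 1 \<and>
                 (\<forall>j\<in>S k \<omega>. \<bar>(A *v x k \<omega> - b) $ j\<bar> \<le> \<bar>(A *v x k \<omega> - b) $ i\<bar>)))"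
    using gen unfolding generated_by_def by blast
  define p where "p = closest_point (sol_set A b) x0"
  have pb: "A *v p = b" and po: "orth A (x0 - p)" using proj_props[OF consistent p_def] by auto
  have "\<exists>\<sigma>>0. \<forall>v. orth A v \<longrightarrow> \<sigma> * (norm v)\<^sup>2 \<le> (norm (A *v v))\<^sup>2" by (rule sigma_exists)
  then obtain \<sigma> where sg: "0 < \<sigma>" "\<forall>v. orth A v \<longrightarrow> \<sigma> * (norm v)\<^sup>2 \<le> (norm (A *v v))\<^sup>2"
    by (elim exE conjE)
  interpret kz M F A b p x0 x w \<sigma>
  proof (rule kz.intro)
    show "\<And>v. orth A v \<Longrightarrow> \<sigma> * (norm v)\<^sup>2 \<le> (norm (A *v v))\<^sup>2" using sg(2) by blast
  qed (fact ps sub pb sg(1) po x0 step waxis xmeas wmeas)+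
  have "\<exists>c>0. \<forall>k. (\<integral>\<omega>. e (Suc k) \<omega> \<partial>M) \<le> (1 - c) * (\<integral>\<omega>. e k \<omega> \<partial>M)"
  proof (cases m)
    case MaxResidual show ?thesis using mcond unfolding MaxResidual adaptive_method.case by (rule contr_maxres)
  next
    case MaxDistance show ?thesis using mcond unfolding MaxDistance adaptive_method.case by (rule contr_maxdist)
  next
    case GRK show ?thesis using mcond unfolding GRK adaptive_method.case by (rule contr_grk)
  next
    case (SKM \<psi>)
    from mcond[unfolded SKM adaptive_method.case] obtain S :: "nat \<Rightarrow> 'a \<Rightarrow> 'n set" where "1 \<le> \<psi>" "\<psi> \<le> CARD('n)"
      "\<forall>k T. {\<omega>\<in>space M. S k \<omega> = T} \<in> sets (F (Suc k))"
      "\<forall>k T. \<forall>B\<in>sets (F k). card T = \<psi> \<longrightarrow>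
                 measure M ({\<omega>\<in>space M. S k \<omega> = T} \<inter> B)
                 = measure M B / real (CARD('n) choose \<psi>)"
      "\<forall>k. \<forall>\<omega>\<in>space M. \<exists>i\<in>S k \<omega>. w k \<omega> = axis i 1 \<and>
                 (\<forall>j\<in>S k \<omega>. \<bar>(A *v x k \<omega> - b) $ j\<bar> \<le> \<bar>(A *v x k \<omega> - b) $ i\<bar>)"
      by (elim conjE exE)
    then show ?thesis by (rule contr_skm)
  qed
  then obtain c where c: "0 < c" "\<And>k. (\<integral>\<omega>. e (Suc k) \<omega> \<partial>M) \<le> (1 - c) * (\<integral>\<omega>. e k \<omega> \<partial>M)"
    by blast
  define \<rho> where "\<rho> = max (1/2) (1 - c)"
  have rho: "0 < \<rho>" "\<rho> < 1" unfolding \<rho>_def using c(1) by auto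
  have contr: "(\<integral>\<omega>. e (Suc k) \<omega> \<partial>M) \<le> \<rho> * (\<integral>\<omega>. e k \<omega> \<partial>M)" for k
  proof -
    have "0 \<le> (\<integral>\<omega>. e k \<omega> \<partial>M)" by (intro integral_nonneg_AE AE_I2 enn)
    then have "(1 - c) * (\<integral>\<omega>. e k \<omega> \<partial>M) \<le> \<rho> * (\<integral>\<omega>. e k \<omega> \<partial>M)"
      unfolding \<rho>_def by (intro mult_right_mono) auto
    then show ?thesis using c(2)[of k] by linarith
  qed
  define e0 where "e0 = (norm (x0 - p))\<^sup>2"
  have e0nn: "0 \<le> e0" unfolding e0_def by simp
  have e0': "\<And>\<omega>. \<omega> \<in> space M \<Longrightarrow> e 0 \<omega> = e0" unfolding e0_def e_def using x0 by simp
  have enn': "\<And>k \<omega>. \<omega> \<in> space M \<Longrightarrow> 0 \<le> e k \<omega>" by (rule enn)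
  have emono': "\<And>k \<omega>. \<omega> \<in> space M \<Longrightarrow> e (Suc k) \<omega> \<le> e k \<omega>" by (rule emono)
  note G = generic_tau[OF ps sub emeasF e0' enn' emono' contr rho]
  define \<tau> where "\<tau> = tau_of e \<rho> e0"
  have int_le: "(\<integral>\<^sup>+\<omega>. ennreal_of_enat (\<tau> l \<omega>) \<partial>M) \<le> ennreal (real l + 1/(1-\<rho>))" for l
    unfolding \<tau>_def by (rule G(2))
  have fin: "(\<integral>\<^sup>+\<omega>. ennreal_of_enat (\<tau> l \<omega>) \<partial>M) < \<infinity>" for l
    using int_le[of l] by (simp add: le_less_trans ennreal_less_top)
  have ind_fin: "(\<integral>\<^sup>+\<omega>. indicator S \<omega> * ennreal_of_enat (\<tau> l \<omega>) \<partial>M) < \<infinity>" for S l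
  proof -
    have "(\<integral>\<^sup>+\<omega>. indicator S \<omega> * ennreal_of_enat (\<tau> l \<omega>) \<partial>M) \<le> (\<integral>\<^sup>+\<omega>. ennreal_of_enat (\<tau> l \<omega>) \<partial>M)"
      by (intro nn_integral_mono) (simp split: split_indicator)
    then show ?thesis using fin[of l] by (simp add: le_less_trans)
  qed
  define Efin where "Efin = {\<omega>\<in>space M. \<forall>l. \<tau> l \<omega> \<noteq> \<infinity>}"
  have Efin_eq: "Efin = {\<omega>\<in>space M. \<forall>l. \<exists>k. e k \<omega> \<le> \<rho>^l * e0}"
    unfolding Efin_def \<tau>_def tau_of_def by auto
  have Efin1: "measure M Efin = 1"
  proof -
    interpret prob_space M by (rule ps)
    have "Measurable.pred M (\<lambda>\<omega>. \<forall>l. \<exists>k. e k \<omega> \<le> \<rho>^l * e0)" by measurable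
    then have meas: "Efin \<in> sets M" unfolding Efin_eq pred_def .
    have "AE \<omega> in M. \<forall>l. \<tau> l \<omega> \<noteq> \<infinity>" unfolding AE_all_countable \<tau>_def using G(3) by blast
    then show ?thesis using prob_Collect_eq_1[of "\<lambda>\<omega>. \<forall>l. \<tau> l \<omega> \<noteq> \<infinity>"] meas unfolding Efin_def by simp
  qed
  have E2eq: "{\<omega>\<in>space M. \<forall>l. \<tau> l \<omega> \<noteq> \<infinity> \<and>
                    (norm (x (the_enat (\<tau> l \<omega>) + 1) \<omega> - p))\<^sup>2 \<le> \<rho> ^ l * (norm (x0 - p))\<^sup>2} = Efin"
  proof (intro set_eqI iffI)
    fix \<omega> assume "\<omega> \<in> Efin"
    then have o: "\<omega> \<in> space M" and f: "\<And>l. \<tau> l \<omega> \<noteq> \<infinity>" unfolding Efin_def by auto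
    have "\<tau> l \<omega> \<noteq> \<infinity> \<and> (norm (x (the_enat (\<tau> l \<omega>) + 1) \<omega> - p))\<^sup>2 \<le> \<rho> ^ l * (norm (x0 - p))\<^sup>2" for l
    proof -
      obtain k where k: "\<tau> l \<omega> = enat k" using f[of l] by auto
      have "e k \<omega> \<le> \<rho>^l * e0" using k unfolding \<tau>_def by (rule tau_fin)
      then have "e (Suc k) \<omega> \<le> \<rho>^l * e0" using emono[OF o, of k] by linarith
      then show ?thesis using k f[of l] unfolding e_def e0_def by simp
    qed
    then show "\<omega> \<in> {\<omega>\<in>space M. \<forall>l. \<tau> l \<omega> \<noteq> \<infinity> \<and>
                    (norm (x (the_enat (\<tau> l \<omega>) + 1) \<omega> - p))\<^sup>2 \<le> \<rho> ^ l * (norm (x0 - p))\<^sup>2}"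
      using o by blast
  qed (auto simp: Efin_def)
  have E1sub: "{\<omega>\<in>space M. \<exists>l. \<tau> l \<omega> \<noteq> \<infinity> \<and> x (the_enat (\<tau> l \<omega>) + 1) \<omega> \<in> sol_set A b} \<subseteq> Efin"
  proof
    fix \<omega> assume "\<omega> \<in> {\<omega>\<in>space M. \<exists>l. \<tau> l \<omega> \<noteq> \<infinity> \<and> x (the_enat (\<tau> l \<omega>) + 1) \<omega> \<in> sol_set A b}"
    then obtain l where o: "\<omega> \<in> space M" and H: "x (Suc (the_enat (\<tau> l \<omega>))) \<omega> \<in> sol_set A b" by auto
    define k where "k = Suc (the_enat (\<tau> l \<omega>))"
    have "A *v x k \<omega> = b" using H unfolding k_def sol_set_def by simp
    then have "\<sigma> * e k \<omega> \<le> 0" using res_sig[OF o, of k] by simp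
    then have ek: "e k \<omega> = 0" using sg(1) enn[of k \<omega>] by (simp add: mult_le_0_iff)
    have "\<tau> l' \<omega> \<le> enat k" for l'
    proof -
      have em: "\<And>j. e (Suc j) \<omega> \<le> e j \<omega>" using emono[OF o] .
      have "e k \<omega> \<le> \<rho>^l' * e0" using ek rho e0nn by simp
      then show ?thesis unfolding \<tau>_def using tau_le_iff[where e=e and \<omega>=\<omega>, OF em] by blast
    qed
    note le = this
    have "\<tau> l' \<omega> \<noteq> \<infinity>" for l' using le[of l'] by (cases "\<tau> l' \<omega>") auto
    then show "\<omega> \<in> Efin" unfolding Efin_def using o by blast
  qed
  have mono_tau: "\<forall>\<omega>\<in>space M. mono (\<lambda>l. \<tau> l \<omega>)"
  proof
    fix \<omega> assume o: "\<omega> \<in> space M"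
    show "mono (\<lambda>l. \<tau> l \<omega>)" unfolding \<tau>_def
      by (rule tau_mono) (use emono[OF o] rho e0nn in auto)
  qed
  have P4: "\<exists>\<kappa>::real. \<forall>l. (AE \<omega> in M. \<tau> l \<omega> \<noteq> \<infinity>) \<longrightarrow>
            (\<integral>\<^sup>+\<omega>. ennreal_of_enat (\<tau> l \<omega>) \<partial>M) \<le> ennreal (real l * \<kappa>)"
  proof (intro exI[of _ "1 + 1/(1-\<rho>)"] allI impI)
    fix l :: nat
    show "(\<integral>\<^sup>+\<omega>. ennreal_of_enat (\<tau> l \<omega>) \<partial>M) \<le> ennreal (real l * (1 + 1/(1-\<rho>)))"
    proof (cases "l = 0")
      case True
      have z: "\<tau> l \<omega> = 0" if o: "\<omega> \<in> space M" for \<omega>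
        using True tau_zero[where e=e and \<omega>=\<omega>, OF emono[OF o] e0'[OF o]] unfolding \<tau>_def by simp
      have "(\<integral>\<^sup>+\<omega>. ennreal_of_enat (\<tau> l \<omega>) \<partial>M) = (\<integral>\<^sup>+\<omega>. 0 \<partial>M)"
        by (intro nn_integral_cong) (simp add: z)
      then show ?thesis by simp
    next
      case False
      have "1/(1-\<rho>) \<le> real l / (1-\<rho>)"
        using False rho by (intro divide_right_mono) auto
      then have "real l + 1/(1-\<rho>) \<le> real l * (1 + 1/(1-\<rho>))"
        by (simp add: algebra_simps)
      then show ?thesis using int_le[of l] by (meson ennreal_leI order_trans)
    qed
  qed
  show ?thesis
  proof (rule exI[of _ \<rho>], intro conjI)
    show "0 \<le> \<rho>" "\<rho> < 1" using rho by auto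
    show "\<exists>\<tau> :: nat \<Rightarrow> 'a \<Rightarrow> enat.
       (\<forall>l. stopping_time (enat_filt M F) (\<tau> l)) \<and>
       (\<forall>\<omega>\<in>space M. mono (\<lambda>l. \<tau> l \<omega>)) \<and>
       (let H = sol_set A b; p = closest_point (sol_set A b) x0;
            E1 = {\<omega>\<in>space M. \<exists>l. \<tau> l \<omega> \<noteq> \<infinity> \<and> x (the_enat (\<tau> l \<omega>) + 1) \<omega> \<in> H};
            E2 = {\<omega>\<in>space M. \<forall>l. \<tau> l \<omega> \<noteq> \<infinity> \<and>
                    (norm (x (the_enat (\<tau> l \<omega>) + 1) \<omega> - p))\<^sup>2 \<le> \<rho> ^ l * (norm (x0 - p))\<^sup>2}
        in measure M (E1 \<union> E2) = 1 \<and>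
           (\<forall>l. (\<integral>\<^sup>+\<omega>. indicator {\<omega>\<in>space M. \<tau> l \<omega> \<noteq> \<infinity> \<and>
                                   x (the_enat (\<tau> l \<omega>) + 1) \<omega> \<in> H} \<omega>
                         * ennreal_of_enat (\<tau> l \<omega>) \<partial>M) < \<infinity>) \<and>
           (\<forall>l. (\<integral>\<^sup>+\<omega>. indicator E2 \<omega> * ennreal_of_enat (\<tau> l \<omega>) \<partial>M) < \<infinity>)) \<and>
       (\<exists>\<kappa>::real. \<forall>l. (AE \<omega> in M. \<tau> l \<omega> \<noteq> \<infinity>) \<longrightarrow>
            (\<integral>\<^sup>+\<omega>. ennreal_of_enat (\<tau> l \<omega>) \<partial>M) \<le> ennreal (real l * \<kappa>))"
    proof (rule exI[of _ \<tau>], intro conjI)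
      show "\<forall>l. stopping_time (enat_filt M F) (\<tau> l)" unfolding \<tau>_def using G(1) by blast
      show "\<forall>\<omega>\<in>space M. mono (\<lambda>l. \<tau> l \<omega>)" by (rule mono_tau)
      show "\<exists>\<kappa>::real. \<forall>l. (AE \<omega> in M. \<tau> l \<omega> \<noteq> \<infinity>) \<longrightarrow>
            (\<integral>\<^sup>+\<omega>. ennreal_of_enat (\<tau> l \<omega>) \<partial>M) \<le> ennreal (real l * \<kappa>)" by (rule P4)
      have U: "{\<omega>\<in>space M. \<exists>l. \<tau> l \<omega> \<noteq> \<infinity> \<and> x (the_enat (\<tau> l \<omega>) + 1) \<omega> \<in> sol_set A b} \<union> Efin = Efin"
        using E1sub by blast
      show "let H = sol_set A b; p = closest_point (sol_set A b) x0;
            E1 = {\<omega>\<in>space M. \<exists>l. \<tau> l \<omega> \<noteq> \<infinity> \<and> x (the_enat (\<tau> l \<omega>) + 1) \<omega> \<in> H};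
            E2 = {\<omega>\<in>space M. \<forall>l. \<tau> l \<omega> \<noteq> \<infinity> \<and>
                    (norm (x (the_enat (\<tau> l \<omega>) + 1) \<omega> - p))\<^sup>2 \<le> \<rho> ^ l * (norm (x0 - p))\<^sup>2}
        in measure M (E1 \<union> E2) = 1 \<and>
           (\<forall>l. (\<integral>\<^sup>+\<omega>. indicator {\<omega>\<in>space M. \<tau> l \<omega> \<noteq> \<infinity> \<and>
                                   x (the_enat (\<tau> l \<omega>) + 1) \<omega> \<in> H} \<omega>
                         * ennreal_of_enat (\<tau> l \<omega>) \<partial>M) < \<infinity>) \<and>
           (\<forall>l. (\<integral>\<^sup>+\<omega>. indicator E2 \<omega> * ennreal_of_enat (\<tau> l \<omega>) \<partial>M) < \<infinity>)"
        unfolding Let_def p_def[symmetric] E2eq U using Efin1 ind_fin by simp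
    qed
  qed
qed

end
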